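(* Let $\mathcal P$ be finite and, for each $p\in\mathcal P$, let $f_p:\mathbb R^n\to\mathbb R^n$ be continuously differentiable with $\dot x=f_p(x)$ forward complete. Let $\sigma$ be a switching signal, $K\subset\mathbb R^n$ compact with nonempty interior, $|\cdot|$ a norm on $\mathbb R^n$ and $\mu$ the matrix measure of its induced matrix norm. Then for all $x,\bar x\in K$ and all $t\ge0$, $$e^{\underline\eta_\sigma(t)}|\bar x-x|\le|\xi_\sigma(t,\bar x)-\xi_\sigma(t,x)|\le e^{\overline\eta_\sigma^{\mathrm{alt}}(t)}|\bar x-x|,$$ where $$\underline\eta_\sigma(t):=\sum_{p\in\mathcal P}\int_0^t\Big(\min_{v\in\mathrm{co}(\xi_\sigma(s,K))}-\mu(-J_xf_p(v))\Big)\mathbf 1[\sigma(s)=p]\,ds,$$ $$\overline\eta_\sigma^{\mathrm{alt}}(t):=\sum_{p\in\mathcal P}\int_0^t\Big(\max_{v\in\mathrm{co}(\xi_\sigma(s,K))}\mu(J_xf_p(v))\Big)\mathbf 1[\sigma(s)=p]\,ds.$$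
   Context: A switching signal is a right-continuous piecewise-constant $\sigma:\mathbb R_{\ge0}\to\mathcal P$ with finitely many switches in every bounded interval; $\xi_\sigma(t,x)$ is the solution of $\dot x=f_\sigma(x)$ at time $t$ from $x$ at time $0$; $\xi_\sigma(t,K):=\{\xi_\sigma(t,x):x\in K\}$; $\mathrm{co}$ convex hull; $J_xf_p$ Jacobian. Matrix measure $\mu(A):=\lim_{t\searrow0}(\|I+tA\|-1)/t$. *)

theory Defs
  imports "HOL-Analysis.Analysis"
begin

definition is_norm :: "(real^'n \<Rightarrow> real) \<Rightarrow> bool" where
  "is_norm N \<longleftrightarrow> (\<forall>x. N x = 0 \<longleftrightarrow> x = 0) \<and> (\<forall>x y. N (x + y) \<le> N x + N y)
     \<and> (\<forall>c x. N (c *\<^sub>R x) = \<bar>c\<bar> * N x)"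

definition induced_norm :: "(real^'n \<Rightarrow> real) \<Rightarrow> real^'n^'n \<Rightarrow> real" where
  "induced_norm N A = (SUP x\<in>{x. N x = 1}. N (A *v x))"

definition matrix_measure :: "(real^'n \<Rightarrow> real) \<Rightarrow> real^'n^'n \<Rightarrow> real" where
  "matrix_measure N A = Lim (at_right 0) (\<lambda>t. (induced_norm N (mat 1 + t *\<^sub>R A) - 1) / t)"

definition jacobian :: "(real^'n \<Rightarrow> real^'n) \<Rightarrow> real^'n \<Rightarrow> real^'n^'n" where
  "jacobian f v = matrix (frechet_derivative f (at v))"

definition continuously_differentiable :: "(real^'n \<Rightarrow> real^'n) \<Rightarrow> bool" where
  "continuously_differentiable g \<longleftrightarrow>
     (\<exists>g'. (\<forall>x. (g has_derivative blinfun_apply (g' x)) (at x)) \<and> continuous_on UNIV g')"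

definition forward_complete :: "(real^'n \<Rightarrow> real^'n) \<Rightarrow> bool" where
  "forward_complete g \<longleftrightarrow> (\<forall>x. \<exists>\<xi>. \<xi> 0 = x \<and>
     (\<forall>t\<ge>0. (\<xi> has_vector_derivative g (\<xi> t)) (at t within {0..})))"

text \<open>Right-continuous piecewise constant signal on [0,infinity) with finitely many
  switches on every bounded interval: on [0,T), sigma(t) equals its value at the
  last switching time s <= t from a finite set S containing 0.\<close>
definition switching_signal :: "(real \<Rightarrow> 'p) \<Rightarrow> bool" where
  "switching_signal \<sigma> \<longleftrightarrow> (\<forall>T>0. \<exists>S. finite S \<and> 0 \<in> S \<and>
     (\<forall>t\<in>{0..<T}. \<sigma> t = \<sigma> (Max {s\<in>S. s \<le> t})))"

definition switched_sol ::
  "('p \<Rightarrow> real^'n \<Rightarrow> real^'n) \<Rightarrow> (real \<Rightarrow> 'p) \<Rightarrow> real^'n \<Rightarrow> (real \<Rightarrow> real^'n) \<Rightarrow> bool" where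
  "switched_sol f \<sigma> x \<xi> \<longleftrightarrow> \<xi> 0 = x \<and> continuous_on {0..} \<xi> \<and>
     (\<forall>t\<ge>0. (\<xi> has_vector_derivative f (\<sigma> t) (\<xi> t)) (at t within {t..}))"

definition switched_flow ::
  "('p \<Rightarrow> real^'n \<Rightarrow> real^'n) \<Rightarrow> (real \<Rightarrow> 'p) \<Rightarrow> real \<Rightarrow> real^'n \<Rightarrow> real^'n" where
  "switched_flow f \<sigma> t x = (THE y. \<exists>\<xi>. switched_sol f \<sigma> x \<xi> \<and> \<xi> t = y)"

definition eta_lower ::
  "('p::finite \<Rightarrow> real^'n \<Rightarrow> real^'n) \<Rightarrow> (real \<Rightarrow> 'p) \<Rightarrow> (real^'n) set \<Rightarrow> (real^'n \<Rightarrow> real) \<Rightarrow> real \<Rightarrow> real" where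
  "eta_lower f \<sigma> K N t = (\<Sum>p\<in>UNIV. integral {0..t} (\<lambda>s.
     (INF v\<in>convex hull (switched_flow f \<sigma> s ` K). - matrix_measure N (- jacobian (f p) v))
     * (if \<sigma> s = p then 1 else 0)))"

definition eta_upper_alt ::
  "('p::finite \<Rightarrow> real^'n \<Rightarrow> real^'n) \<Rightarrow> (real \<Rightarrow> 'p) \<Rightarrow> (real^'n) set \<Rightarrow> (real^'n \<Rightarrow> real) \<Rightarrow> real \<Rightarrow> real" where
  "eta_upper_alt f \<sigma> K N t = (\<Sum>p\<in>UNIV. integral {0..t} (\<lambda>s.
     (SUP v\<in>convex hull (switched_flow f \<sigma> s ` K). matrix_measure N (jacobian (f p) v))
     * (if \<sigma> s = p then 1 else 0)))"

end

theory Submission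
  imports Defs
begin


context fixes N :: "real^'n \<Rightarrow> real" assumes N: "is_norm N"
begin

lemma N_zero_iff: "N x = 0 \<longleftrightarrow> x = 0" using N unfolding is_norm_def by blast
lemma N_tri: "N (x + y) \<le> N x + N y" using N unfolding is_norm_def by blast
lemma N_hom: "N (c *\<^sub>R x) = \<bar>c\<bar> * N x" using N unfolding is_norm_def by blast
lemma N_0[simp]: "N 0 = 0" using N_zero_iff by simp
lemma N_neg: "N (- x) = N x" using N_hom[of "-1" x] by simp
lemma N_nonneg: "N x \<ge> 0"
proof -
  have "N (x + - x) \<le> N x + N (- x)" by (rule N_tri)
  then show ?thesis by (simp add: N_neg)
qed
lemma N_minus_commute: "N (x - y) = N (y - x)"
  using N_neg[of "x - y"] by simp
lemma N_diff: "N x - N y \<le> N (x - y)"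
  using N_tri[of "x - y" y] by simp
lemma N_tri_diff: "N (x - y) \<le> N x + N y"
  using N_tri[of x "- y"] by (simp add: N_neg)
lemma N_sum: "N (sum g A) \<le> (\<Sum>i\<in>A. N (g i))"
proof (induction A rule: infinite_finite_induct)
  case (insert x F) then show ?case using N_tri[of "g x" "sum g F"] by simp
qed auto

lemma N_upper: "\<exists>C>0. \<forall>x. N x \<le> C * norm x"
proof -
  define C where "C = (\<Sum>i\<in>UNIV. N (axis i (1::real))) + 1"
  have C0: "C > 0" unfolding C_def using N_nonneg by (simp add: add_nonneg_pos sum_nonneg)
  have "N x \<le> C * norm x" for x
  proof -
    have "N x = N (\<Sum>i\<in>UNIV. x $ i *s axis i 1)" by (simp add: basis_expansion)
    also have "\<dots> \<le> (\<Sum>i\<in>UNIV. N (x $ i *s axis i 1))" by (rule N_sum)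
    also have "\<dots> = (\<Sum>i\<in>UNIV. \<bar>x $ i\<bar> * N (axis i 1))"
      using N_hom by (simp add: scalar_mult_eq_scaleR)
    also have "\<dots> \<le> (\<Sum>i\<in>UNIV. norm x * N (axis i 1))"
      by (intro sum_mono mult_right_mono N_nonneg component_le_norm_cart)
    also have "\<dots> \<le> norm x * C" unfolding C_def by (simp add: sum_distrib_left[symmetric] algebra_simps)
    finally show ?thesis by (simp add: mult.commute)
  qed
  with C0 show ?thesis by blast
qed

lemma N_lipschitz: "\<exists>C>0. \<forall>x y. \<bar>N x - N y\<bar> \<le> C * norm (x - y)"
proof -
  obtain C where C: "C > 0" "\<And>x. N x \<le> C * norm x" using N_upper by blast
  have "\<bar>N x - N y\<bar> \<le> C * norm (x - y)" for x y
    using N_diff[of x y] N_diff[of y x] C(2)[of "x - y"] N_minus_commute[of x y] by linarith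
  with C show ?thesis by blast
qed

lemma N_cont: "continuous_on UNIV N"
proof -
  obtain C where C: "C > 0" "\<And>x y. \<bar>N x - N y\<bar> \<le> C * norm (x - y)" using N_lipschitz by blast
  have "C-lipschitz_on UNIV N"
    by (rule lipschitz_onI) (use C in \<open>auto simp: dist_norm dist_real_def\<close>)
  then show ?thesis by (rule lipschitz_on_continuous_on)
qed

lemma N_lower: "\<exists>c>0. \<forall>x. c * norm x \<le> N x"
proof -
  have ne: "sphere (0::real^'n) 1 \<noteq> {}"
  proof -
    obtain i :: 'n where True by blast
    have "axis i (1::real) \<in> sphere 0 1" by (simp add: norm_axis_1)
    then show ?thesis by blast
  qed
  obtain x0 where x0: "x0 \<in> sphere 0 1" "\<And>y. y \<in> sphere 0 1 \<Longrightarrow> N x0 \<le> N y"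
    using continuous_attains_inf[OF compact_sphere ne continuous_on_subset[OF N_cont]] by blast
  have c0: "N x0 > 0" using x0(1) N_zero_iff N_nonneg[of x0] by (metis less_eq_real_def mem_sphere_0 norm_zero zero_neq_one)
  have "N x0 * norm x \<le> N x" for x
  proof (cases "x = 0")
    case False
    have "(1 / norm x) *\<^sub>R x \<in> sphere 0 1" using False by simp
    then have "N x0 \<le> N ((1 / norm x) *\<^sub>R x)" by (rule x0(2))
    also have "\<dots> = N x / norm x" using N_hom by simp
    finally show ?thesis using False by (simp add: field_simps)
  qed simp
  with c0 show ?thesis by blast
qed


abbreviation IN where "IN \<equiv> induced_norm N"

lemma unit_ne: "\<exists>z. N z = 1"
proof -
  obtain i :: 'n where True by blast
  have "axis i (1::real) \<noteq> 0" by (simp add: axis_eq_0_iff)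
  then have p: "N (axis i 1) > 0" using N_zero_iff N_nonneg less_eq_real_def by metis
  have "N ((1 / N (axis i 1)) *\<^sub>R axis i 1) = 1" using N_hom p by simp
  then show ?thesis by blast
qed

lemma IN_bdd: "bdd_above ((\<lambda>z. N (A *v z)) ` {z. N z = 1})"
proof -
  obtain C where C: "C > 0" "\<And>x. N x \<le> C * norm x" using N_upper by blast
  obtain c where c: "c > 0" "\<And>x. c * norm x \<le> N x" using N_lower by blast
  have bl: "bounded_linear (\<lambda>z. A *v z)"
    by (simp add: matrix_vector_mul_bounded_linear)
  obtain K where K: "K > 0" "\<And>z. norm (A *v z) \<le> norm z * K"
    using bounded_linear.pos_bounded[OF bl] by blast
  have "N (A *v z) \<le> C * K / c" if "N z = 1" for z
  proof -
    have nz: "norm z \<le> 1 / c" using c(2)[of z] that c(1) by (simp add: field_simps)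
    have "N (A *v z) \<le> C * (norm z * K)" using C(2)[of "A *v z"] K(2)[of z] C(1)
      by (meson order_trans mult_left_mono less_imp_le)
    also have "\<dots> \<le> C * ((1/c) * K)" using nz C(1) K(1) by (intro mult_left_mono mult_right_mono) auto
    finally show ?thesis by simp
  qed
  then show ?thesis by (intro bdd_aboveI2) auto
qed

lemma IN_le: "N (A *v z) \<le> IN A * N z"
proof (cases "z = 0")
  case True then show ?thesis by simp
next
  case False
  then have p: "N z > 0" using N_zero_iff N_nonneg less_eq_real_def by metis
  have u: "N ((1 / N z) *\<^sub>R z) = 1" using N_hom p by simp
  have "N (A *v ((1 / N z) *\<^sub>R z)) \<le> IN A"
    unfolding induced_norm_def using u by (intro cSUP_upper IN_bdd) auto
  moreover have "N (A *v ((1 / N z) *\<^sub>R z)) = N (A *v z) / N z"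
    by (simp add: matrix_scaleR_vector_ac scaleR_matrix_vector_assoc[symmetric] N_hom p abs_of_pos)
  ultimately show ?thesis using p by (simp add: field_simps)
qed

lemma IN_least: assumes "\<And>z. N (A *v z) \<le> M * N z" shows "IN A \<le> M"
  unfolding induced_norm_def
proof (rule cSUP_least)
  show "{z. N z = 1} \<noteq> {}" using unit_ne by auto
  fix z assume "z \<in> {z. N z = 1}"
  then show "N (A *v z) \<le> M" using assms[of z] by simp
qed

lemma IN_nonneg: "IN A \<ge> 0"
proof -
  obtain z where z: "N z = 1" using unit_ne by blast
  show ?thesis using IN_le[of A z] N_nonneg[of "A *v z"] z by simp
qed

lemma IN_add: "IN (A + B) \<le> IN A + IN B"
proof (rule IN_least)
  fix z
  have "N ((A + B) *v z) \<le> N (A *v z) + N (B *v z)"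
    unfolding matrix_vector_mult_add_rdistrib by (rule N_tri)
  also have "\<dots> \<le> IN A * N z + IN B * N z" by (intro add_mono IN_le)
  finally show "N ((A + B) *v z) \<le> (IN A + IN B) * N z" by (simp add: algebra_simps)
qed

lemma IN_scale: "IN (c *\<^sub>R A) \<le> \<bar>c\<bar> * IN A"
  by (rule IN_least) (simp add: scaleR_matrix_vector_assoc[symmetric] N_hom mult.assoc IN_le mult_left_mono)

lemma IN_0: "IN 0 = 0"
  using IN_nonneg[of 0] IN_least[of 0 0] by simp

lemma IN_sum: "IN (sum g A) \<le> (\<Sum>i\<in>A. IN (g i))"
proof (induction A rule: infinite_finite_induct)
  case (insert x F) then show ?case using IN_add[of "g x" "sum g F"] by simp
qed (auto simp: IN_0)

lemma IN_id: "IN (mat 1) = 1"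
proof -
  obtain z where z: "N z = 1" using unit_ne by blast
  have "IN (mat 1) \<le> 1" by (rule IN_least) simp
  moreover have "1 \<le> IN (mat 1)" using IN_le[of "mat 1" z] z by simp
  ultimately show ?thesis by simp
qed

lemma IN_diff: "IN A \<le> IN B + IN (A - B)"
  using IN_add[of B "A - B"] by simp

definition qf where "qf A h = (IN (mat 1 + h *\<^sub>R A) - 1) / h"

lemma qf_mono: assumes "0 < h1" "h1 \<le> h2" shows "qf A h1 \<le> qf A h2"
proof -
  define \<theta> where "\<theta> = h1 / h2"
  have th: "0 < \<theta>" "\<theta> \<le> 1" using assms unfolding \<theta>_def by auto
  have eq: "mat 1 + h1 *\<^sub>R A = (1 - \<theta>) *\<^sub>R mat 1 + \<theta> *\<^sub>R (mat 1 + h2 *\<^sub>R A)"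
    using assms unfolding \<theta>_def by (simp add: algebra_simps)
  have "IN (mat 1 + h1 *\<^sub>R A) \<le> IN ((1 - \<theta>) *\<^sub>R mat 1) + IN (\<theta> *\<^sub>R (mat 1 + h2 *\<^sub>R A))"
    unfolding eq by (rule IN_add)
  also have "\<dots> \<le> (1 - \<theta>) * 1 + \<theta> * IN (mat 1 + h2 *\<^sub>R A)"
    using IN_scale[of "1 - \<theta>" "mat 1"] IN_scale[of \<theta> "mat 1 + h2 *\<^sub>R A"] th IN_id by auto
  finally have "IN (mat 1 + h1 *\<^sub>R A) - 1 \<le> \<theta> * (IN (mat 1 + h2 *\<^sub>R A) - 1)" by (simp add: algebra_simps)
  then have "(IN (mat 1 + h1 *\<^sub>R A) - 1) / h1 \<le> (IN (mat 1 + h2 *\<^sub>R A) - 1) / h2"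
    using assms unfolding \<theta>_def by (simp add: field_simps)
  then show ?thesis unfolding qf_def .
qed

lemma qf_bounds: assumes "h > 0" shows "- IN A \<le> qf A h" "qf A h \<le> IN A"
proof -
  have "IN (mat 1) \<le> IN (mat 1 + h *\<^sub>R A) + IN (- (h *\<^sub>R A))"
    using IN_diff[of "mat 1" "mat 1 + h *\<^sub>R A"] by simp
  also have "IN (- (h *\<^sub>R A)) \<le> h * IN A" using IN_scale[of "-h" A] assms by simp
  finally have "1 - h * IN A \<le> IN (mat 1 + h *\<^sub>R A)" using IN_id by simp
  then show "- IN A \<le> qf A h" unfolding qf_def using assms by (simp add: field_simps)
  have "IN (mat 1 + h *\<^sub>R A) \<le> IN (mat 1) + IN (h *\<^sub>R A)" by (rule IN_add)
  also have "IN (h *\<^sub>R A) \<le> h * IN A" using IN_scale[of "h" A] assms by simp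
  finally show "qf A h \<le> IN A" unfolding qf_def using assms IN_id by (simp add: field_simps)
qed

lemma qf_tendsto: "(qf A \<longlongrightarrow> Inf (qf A ` {0<..})) (at_right 0)"
proof (rule order_tendstoI)
  have bdd: "bdd_below (qf A ` {0<..})" using qf_bounds(1) by (intro bdd_belowI2) auto
  fix a assume "a < Inf (qf A ` {0<..})"
  then show "eventually (\<lambda>h. a < qf A h) (at_right 0)"
    using cInf_lower[OF _ bdd] unfolding eventually_at_right_field
    by (intro exI[of _ 1]) (auto intro: less_le_trans)
next
  fix a assume "Inf (qf A ` {0<..}) < a"
  then obtain h0 where h0: "h0 > 0" "qf A h0 < a" using cInf_lessD[of "qf A ` {0<..}" a] by auto
  show "eventually (\<lambda>h. qf A h < a) (at_right 0)"
    unfolding eventually_at_right_field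
  proof (intro exI[of _ h0] conjI allI impI)
    fix y :: real assume "0 < y" "y < h0"
    then show "qf A y < a" using qf_mono[of y h0 A] h0 by linarith
  qed (use h0 in auto)
qed

lemma mu_tendsto: "(qf A \<longlongrightarrow> matrix_measure N A) (at_right 0)"
proof -
  have e: "(\<lambda>t. (IN (mat 1 + t *\<^sub>R A) - 1) / t) = qf A" by (simp add: qf_def fun_eq_iff)
  have "matrix_measure N A = Inf (qf A ` {0<..})"
    unfolding matrix_measure_def e
    by (rule tendsto_Lim[OF trivial_limit_at_right_real qf_tendsto])
  then show ?thesis using qf_tendsto by simp
qed

lemma mu_le_IN: "\<bar>matrix_measure N A\<bar> \<le> IN A"
proof -
  have "matrix_measure N A \<le> IN A"
    by (rule tendsto_upperbound[OF mu_tendsto]) (auto intro!: eventuallyI qf_bounds simp: eventually_at_right_field intro: exI[of _ 1])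
  moreover have "- IN A \<le> matrix_measure N A"
    by (rule tendsto_lowerbound[OF mu_tendsto]) (auto intro!: eventuallyI qf_bounds simp: eventually_at_right_field intro: exI[of _ 1])
  ultimately show ?thesis by simp
qed

lemma mu_lip: "matrix_measure N A \<le> matrix_measure N B + IN (A - B)"
proof -
  have "qf A h \<le> qf B h + IN (A - B)" if "h > 0" for h
  proof -
    have "IN (mat 1 + h *\<^sub>R A) \<le> IN (mat 1 + h *\<^sub>R B) + IN (h *\<^sub>R (A - B))"
      using IN_diff[of "mat 1 + h *\<^sub>R A" "mat 1 + h *\<^sub>R B"] by (simp add: algebra_simps)
    also have "IN (h *\<^sub>R (A - B)) \<le> h * IN (A - B)" using IN_scale[of h "A - B"] that by simp
    finally show ?thesis unfolding qf_def using that by (simp add: field_simps)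
  qed
  then have "eventually (\<lambda>h. qf A h \<le> qf B h + IN (A - B)) (at_right 0)"
    by (auto simp: eventually_at_right_field intro: exI[of _ 1])
  then show ?thesis
    by (rule tendsto_le[OF trivial_limit_at_right_real tendsto_add[OF mu_tendsto tendsto_const] mu_tendsto])
qed

lemma mu_eventually: assumes "\<epsilon> > 0"
  shows "eventually (\<lambda>h. IN (mat 1 + h *\<^sub>R A) \<le> 1 + h * (matrix_measure N A + \<epsilon>)) (at_right 0)"
proof -
  have "eventually (\<lambda>h. qf A h < matrix_measure N A + \<epsilon>) (at_right 0)"
    using mu_tendsto assms by (intro order_tendstoD) auto
  moreover have "eventually (\<lambda>h. h > 0) (at_right (0::real))" by (rule eventually_at_right_less)
  ultimately show ?thesis
    by eventually_elim (auto simp: qf_def field_simps)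
qed

lemma avg_eventually:
  fixes J :: "nat \<Rightarrow> real^'n^'n"
  assumes "n > 0" "\<And>k. k < n \<Longrightarrow> matrix_measure N (J k) \<le> M" "\<epsilon> > 0"
  shows "eventually (\<lambda>h. IN (mat 1 + h *\<^sub>R ((1 / real n) *\<^sub>R (\<Sum>k<n. J k))) \<le> 1 + h * (M + \<epsilon>)) (at_right 0)"
proof -
  have "eventually (\<lambda>h. \<forall>k\<in>{..<n}. IN (mat 1 + h *\<^sub>R J k) \<le> 1 + h * (matrix_measure N (J k) + \<epsilon>)) (at_right 0)"
    using mu_eventually[OF assms(3)] by (intro eventually_ball_finite) auto
  moreover have "eventually (\<lambda>h. h > 0) (at_right (0::real))" by (rule eventually_at_right_less)
  ultimately show ?thesis
  proof eventually_elim
    case (elim h)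
    have eq: "mat 1 + h *\<^sub>R ((1 / real n) *\<^sub>R (\<Sum>k<n. J k)) = (1 / real n) *\<^sub>R (\<Sum>k<n. mat 1 + h *\<^sub>R J k)"
    proof -
      have "(\<Sum>k<n. mat 1 + h *\<^sub>R J k) = real n *\<^sub>R mat 1 + h *\<^sub>R (\<Sum>k<n. J k)"
        by (simp only: sum.distrib scaleR_sum_right[symmetric] sum_constant_scaleR card_lessThan)
      then show ?thesis using assms(1) by (simp add: algebra_simps)
    qed
    have "IN ((1 / real n) *\<^sub>R (\<Sum>k<n. mat 1 + h *\<^sub>R J k)) \<le> (1 / real n) * IN (\<Sum>k<n. mat 1 + h *\<^sub>R J k)"
      using IN_scale[of "1 / real n" "\<Sum>k<n. mat 1 + h *\<^sub>R J k"] by simp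
    also have "\<dots> \<le> (1 / real n) * (\<Sum>k<n. IN (mat 1 + h *\<^sub>R J k))"
      by (intro mult_left_mono IN_sum) auto
    also have "\<dots> \<le> (1 / real n) * (\<Sum>k<n. 1 + h * (M + \<epsilon>))"
      using elim assms(2) 
      by (intro mult_left_mono sum_mono) (auto intro: order_trans simp: mult_left_mono)
    also have "\<dots> = 1 + h * (M + \<epsilon>)" using assms(1) by simp
    finally show ?case unfolding eq .
  qed
qed

end


lemma cmp_eps:
  fixes \<phi> :: "real \<Rightarrow> real"
  assumes ab: "a \<le> b" and cont: "continuous_on {a..b} \<phi>" and c: "c > 0"
    and D: "\<And>t \<epsilon>. t \<in> {a..<b} \<Longrightarrow> \<phi> t < \<phi> a + c \<Longrightarrow> \<epsilon> > 0 \<Longrightarrow>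
               eventually (\<lambda>r. \<phi> r \<le> \<phi> t + (r - t) * \<epsilon>) (at_right t)"
    and e: "\<epsilon> > 0" "\<epsilon> * (b - a) < c"
  shows "\<phi> b \<le> \<phi> a + \<epsilon> * (b - a)"
proof (rule ccontr)
  assume nb: "\<not> ?thesis"
  define V where "V = {s\<in>{a..b}. \<phi> s > \<phi> a + \<epsilon> * (s - a)}"
  have bV: "b \<in> V" using nb ab unfolding V_def by auto
  have bdd: "bdd_below V" unfolding V_def by (rule bdd_belowI[of _ a]) auto
  define s0 where "s0 = Inf V"
  have s0a: "a \<le> s0" unfolding s0_def using bV by (intro cInf_greatest) (auto simp: V_def)
  have s0b: "s0 \<le> b" unfolding s0_def using bV bdd by (rule cInf_lower)
  have below: "\<phi> r \<le> \<phi> a + \<epsilon> * (r - a)" if "a \<le> r" "r < s0" for r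
  proof (rule ccontr)
    assume "\<not> ?thesis"
    then have "r \<in> V" using that s0b unfolding V_def by auto
    then have "s0 \<le> r" unfolding s0_def using bdd by (rule cInf_lower)
    then show False using that by simp
  qed
  have at0: "\<phi> s0 \<le> \<phi> a + \<epsilon> * (s0 - a)"
  proof (cases "s0 = a")
    case True then show ?thesis by simp
  next
    case False
    then have as0: "a < s0" using s0a by simp
    have "(\<phi> \<longlongrightarrow> \<phi> s0) (at s0 within {a..s0})"
      using cont s0a s0b unfolding continuous_on_def
      by (meson atLeastAtMost_iff atLeastatMost_subset_iff order_refl tendsto_within_subset)
    then have lim: "(\<phi> \<longlongrightarrow> \<phi> s0) (at_left s0)" using at_within_Icc_at_left[OF as0] by simp
    have ev: "eventually (\<lambda>r. \<phi> r \<le> \<phi> a + \<epsilon> * (r - a)) (at_left s0)"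
      unfolding eventually_at_left_field using as0 below by (intro exI[of _ a]) auto
    have lim2: "((\<lambda>r. \<phi> a + \<epsilon> * (r - a)) \<longlongrightarrow> \<phi> a + \<epsilon> * (s0 - a)) (at_left s0)"
      by (intro tendsto_intros)
    show ?thesis by (rule tendsto_le[OF trivial_limit_at_left_real lim2 lim ev])
  qed
  have s0V: "s0 \<notin> V" using at0 unfolding V_def by auto
  have s0lt: "s0 < b" using s0b bV s0V by (cases "s0 = b") auto
  have lt: "\<phi> s0 < \<phi> a + c"
  proof -
    have "\<epsilon> * (s0 - a) \<le> \<epsilon> * (b - a)" using e s0b by (intro mult_left_mono) auto
    then show ?thesis using at0 e by linarith
  qed
  have "eventually (\<lambda>r. \<phi> r \<le> \<phi> s0 + (r - s0) * \<epsilon>) (at_right s0)"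
    using D[of s0 \<epsilon>] s0a s0lt lt e by auto
  then obtain d where d: "d > s0" "\<And>r. r > s0 \<Longrightarrow> r < d \<Longrightarrow> \<phi> r \<le> \<phi> s0 + (r - s0) * \<epsilon>"
    unfolding eventually_at_right_field by blast
  have "s0 + (d - s0) / 2 \<le> Inf V"
  proof (rule cInf_greatest)
    show "V \<noteq> {}" using bV by auto
    fix v assume v: "v \<in> V"
    have "s0 \<le> v" using v bdd unfolding s0_def by (rule cInf_lower)
    moreover have "v \<noteq> s0" using v s0V by auto
    moreover have "\<not> (v < d)" if "s0 < v"
    proof
      assume "v < d"
      then have "\<phi> v \<le> \<phi> s0 + (v - s0) * \<epsilon>" using d(2) that by simp
      also have "\<dots> \<le> \<phi> a + \<epsilon> * (v - a)" using at0 by (simp add: algebra_simps)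
      finally show False using v unfolding V_def by simp
    qed
    ultimately show "s0 + (d - s0) / 2 \<le> v" by (cases "s0 < v") (use d(1) in \<open>auto simp: field_simps\<close>)
  qed
  then show False using d(1) unfolding s0_def[symmetric] by simp
qed

lemma cmp:
  fixes \<phi> :: "real \<Rightarrow> real"
  assumes ab: "a \<le> b" and cont: "continuous_on {a..b} \<phi>" and c: "c > 0"
    and D: "\<And>t \<epsilon>. t \<in> {a..<b} \<Longrightarrow> \<phi> t < \<phi> a + c \<Longrightarrow> \<epsilon> > 0 \<Longrightarrow>
               eventually (\<lambda>r. \<phi> r \<le> \<phi> t + (r - t) * \<epsilon>) (at_right t)"
  shows "\<phi> b \<le> \<phi> a"
proof (rule field_le_epsilon)
  fix e :: real assume e: "e > 0"
  define \<epsilon> where "\<epsilon> = min e (c / 2) / (b - a + 1)"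
  have \<epsilon>0: "\<epsilon> > 0" unfolding \<epsilon>_def using e c ab by auto
  have "\<epsilon> * (b - a) \<le> min e (c / 2)"
  proof -
    have "\<epsilon> * (b - a) \<le> \<epsilon> * (b - a + 1)" using \<epsilon>0 by simp
    also have "\<dots> = min e (c / 2)" unfolding \<epsilon>_def using ab by simp
    finally show ?thesis .
  qed
  then have "\<epsilon> * (b - a) < c" "\<epsilon> * (b - a) \<le> e" using c by auto
  with cmp_eps[OF ab cont c D \<epsilon>0] show "\<phi> b \<le> \<phi> a + e" by force
qed

lemma gstep:
  fixes u \<eta> :: "real \<Rightarrow> real"
  assumes U: "\<And>\<epsilon>. \<epsilon> > 0 \<Longrightarrow> eventually (\<lambda>r. u r \<le> u t + (r - t) * (k * u t + \<epsilon>)) (at_right t)"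
    and E: "(\<eta> has_real_derivative k) (at t within {t<..})"
    and e: "\<epsilon> > 0"
  shows "eventually (\<lambda>r. u r * exp (- \<eta> r) \<le> u t * exp (- \<eta> t) + (r - t) * \<epsilon>) (at_right t)"
proof -
  define w where "w r = exp (- \<eta> r)" for r
  have W: "(w has_real_derivative (- k * w t)) (at t within {t<..})"
    unfolding w_def using E by (auto intro!: derivative_eq_intros)
  have wpos: "w r > 0" for r unfolding w_def by simp
  define \<epsilon>1 where "\<epsilon>1 = \<epsilon> / (w t + 1)"
  have e1: "\<epsilon>1 > 0" unfolding \<epsilon>1_def using e wpos[of t] by simp
  have e1e: "\<epsilon>1 * w t + \<epsilon>1 = \<epsilon>"
  proof -
    have "\<epsilon>1 * w t + \<epsilon>1 = \<epsilon>1 * (w t + 1)" by (simp add: algebra_simps)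
    also have "\<dots> = \<epsilon>" unfolding \<epsilon>1_def using wpos[of t] by simp
    finally show ?thesis .
  qed
  define Q where "Q r = (k * u t + \<epsilon>1) * w r + u t * ((w r - w t) / (r - t))" for r
  have wc: "(w \<longlongrightarrow> w t) (at_right t)"
    using DERIV_continuous[OF W] by (simp add: continuous_within)
  have wd: "((\<lambda>r. (w r - w t) / (r - t)) \<longlongrightarrow> - k * w t) (at_right t)"
    using W unfolding has_field_derivative_iff .
  have "(Q \<longlongrightarrow> (k * u t + \<epsilon>1) * w t + u t * (- k * w t)) (at_right t)"
    unfolding Q_def[abs_def] by (intro tendsto_intros wc wd)
  moreover have "(k * u t + \<epsilon>1) * w t + u t * (- k * w t) = \<epsilon>1 * w t" by (simp add: algebra_simps)
  ultimately have "(Q \<longlongrightarrow> \<epsilon>1 * w t) (at_right t)" by simp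
  then have evQ: "eventually (\<lambda>r. Q r < \<epsilon>1 * w t + \<epsilon>1) (at_right t)"
    using e1 by (intro order_tendstoD) auto
  show ?thesis
    using evQ U[OF e1] eventually_at_right_less[of t]
  proof eventually_elim
    case (elim r)
    have "u r * w r \<le> (u t + (r - t) * (k * u t + \<epsilon>1)) * w r"
      using elim(2) wpos[of r] by (intro mult_right_mono) auto
    also have "\<dots> = u t * w t + (r - t) * Q r"
      unfolding Q_def using elim(3) by (simp add: field_simps)
    also have "\<dots> \<le> u t * w t + (r - t) * \<epsilon>"
      using elim(1,3) e1e by (intro add_left_mono mult_left_mono) auto
    finally show ?case unfolding w_def .
  qed
qed

lemma at_right_Ici: "at t within {t..} = at_right (t::real)"
  by (rule at_within_nhd[of t UNIV]) auto

lemma at_right_Icc: "t < b \<Longrightarrow> at t within {t..b} = at_right (t::real)"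
  by (rule at_within_Icc_at_right)

lemma vderiv_approx:
  fixes e :: "real \<Rightarrow> 'a::real_normed_vector"
  assumes "(e has_vector_derivative d) (at_right t)" "\<epsilon> > 0"
  shows "eventually (\<lambda>r. norm (e r - (e t + (r - t) *\<^sub>R d)) \<le> (r - t) * \<epsilon>) (at_right t)"
proof -
  have "((\<lambda>y. (1 / norm (y - t)) *\<^sub>R (e y - (e t + (y - t) *\<^sub>R d))) \<longlongrightarrow> 0) (at_right t)"
    using assms(1) unfolding has_vector_derivative_def has_derivative_within by blast
  from tendstoD[OF this assms(2)] have "eventually (\<lambda>y. dist ((1 / norm (y - t)) *\<^sub>R (e y - (e t + (y - t) *\<^sub>R d))) 0 < \<epsilon>) (at_right t)" .
  then show ?thesis using eventually_at_right_less[of t]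
  proof eventually_elim
    case (elim r)
    then have "norm (e r - (e t + (r - t) *\<^sub>R d)) / (r - t) < \<epsilon>" by simp
    then show ?case using elim(2) by (simp add: field_simps)
  qed
qed

lemma gronwall:
  fixes u \<eta> k :: "real \<Rightarrow> real"
  assumes ab: "a \<le> b" and cu: "continuous_on {a..b} u" and ce: "continuous_on {a..b} \<eta>" and c: "c > 0"
    and D: "\<And>t \<epsilon>. t \<in> {a..<b} \<Longrightarrow> u t * exp (- \<eta> t) < u a * exp (- \<eta> a) + c \<Longrightarrow> \<epsilon> > 0 \<Longrightarrow>
               eventually (\<lambda>r. u r \<le> u t + (r - t) * (k t * u t + \<epsilon>)) (at_right t)"
    and E: "\<And>t. t \<in> {a..<b} \<Longrightarrow> (\<eta> has_real_derivative k t) (at t within {t<..})"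
  shows "u b * exp (- \<eta> b) \<le> u a * exp (- \<eta> a)"
proof (rule cmp[where \<phi>="\<lambda>r. u r * exp (- \<eta> r)", OF ab _ c])
  show "continuous_on {a..b} (\<lambda>r. u r * exp (- \<eta> r))"
    by (intro continuous_intros cu ce)
  fix t \<epsilon> :: real assume t: "t \<in> {a..<b}" and lt: "u t * exp (- \<eta> t) < u a * exp (- \<eta> a) + c" and e: "\<epsilon> > 0"
  show "eventually (\<lambda>r. u r * exp (- \<eta> r) \<le> u t * exp (- \<eta> t) + (r - t) * \<epsilon>) (at_right t)"
    by (rule gstep[OF D[OF t lt] E[OF t] e])
qed


lemma C1_deriv:
  assumes "continuously_differentiable g"
  obtains g' where "\<And>x. (g has_derivative blinfun_apply (g' x)) (at x)" "continuous_on UNIV g'"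
  using assms unfolding continuously_differentiable_def by blast

lemma C1_cont: assumes "continuously_differentiable g" shows "continuous_on UNIV g"
proof -
  obtain g' where d: "\<And>x. (g has_derivative blinfun_apply (g' x)) (at x)"
    using C1_deriv[OF assms] by blast
  show ?thesis by (intro continuous_at_imp_continuous_on ballI has_derivative_continuous[OF d])
qed

lemma C1_lip1:
  assumes "continuously_differentiable g"
  shows "\<exists>L\<ge>0. \<forall>x\<in>cball 0 R. \<forall>y\<in>cball 0 R. norm (g x - g y) \<le> L * norm (x - y)"
proof -
  obtain g' where d: "\<And>x. (g has_derivative blinfun_apply (g' x)) (at x)" and c: "continuous_on UNIV g'"
    using C1_deriv[OF assms] by blast
  have "compact (g' ` cball 0 R)" by (intro compact_continuous_image continuous_on_subset[OF c]) auto
  then have "bounded (g' ` cball 0 R)" by (rule compact_imp_bounded)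
  then obtain B where B0: "B > 0" "\<forall>y\<in>g' ` cball 0 R. norm y \<le> B"
    unfolding bounded_pos by blast
  then have B: "B > 0" "\<And>x. x \<in> cball 0 R \<Longrightarrow> norm (g' x) \<le> B" by auto
  have "norm (g x - g y) \<le> B * norm (x - y)" if "x \<in> cball 0 R" "y \<in> cball 0 R" for x y
    by (rule differentiable_bound[OF convex_cball _ _ that])
       (auto intro: has_derivative_at_withinI d simp: B(2) norm_blinfun.rep_eq[symmetric])
  then show ?thesis using B(1) by (intro exI[of _ B]) auto
qed

lemma C1_bdd1:
  assumes "continuously_differentiable g"
  shows "\<exists>B\<ge>0. \<forall>x\<in>cball 0 R. norm (g x) \<le> B"
proof -
  have "compact (g ` cball 0 R)" by (intro compact_continuous_image continuous_on_subset[OF C1_cont[OF assms]]) auto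
  then have "bounded (g ` cball 0 R)" by (rule compact_imp_bounded)
  then obtain B where B0: "B > 0" "\<forall>y\<in>g ` cball 0 R. norm y \<le> B"
    unfolding bounded_pos by blast
  then show ?thesis by (intro exI[of _ B]) auto
qed

lemma finite_max_bound:
  fixes P :: "'p::finite \<Rightarrow> real \<Rightarrow> bool"
  assumes "\<And>p. \<exists>B\<ge>0. P p B" and mono: "\<And>p B B'. P p B \<Longrightarrow> B \<le> B' \<Longrightarrow> P p B'"
  shows "\<exists>B>0. \<forall>p. P p B"
proof -
  obtain Bf where Bf: "\<And>p. Bf p \<ge> 0 \<and> P p (Bf p)" using assms(1) by metis
  define B where "B = (\<Sum>p\<in>UNIV. Bf p) + 1"
  have "Bf p \<le> B" for p
  proof -
    have "Bf p \<le> (\<Sum>p\<in>UNIV. Bf p)" by (rule member_le_sum) (use Bf in auto)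
    then show ?thesis unfolding B_def by simp
  qed
  moreover have "B > 0" unfolding B_def using Bf by (simp add: add_nonneg_pos sum_nonneg)
  ultimately show ?thesis using Bf mono by blast
qed

lemma switching_induct:
  fixes \<sigma> :: "real \<Rightarrow> 'p"
  assumes sw: "switching_signal \<sigma>" and T: "T > 0"
    and Q0: "Q 0"
    and step: "\<And>a b. 0 \<le> a \<Longrightarrow> a < b \<Longrightarrow> b \<le> T \<Longrightarrow> Q a \<Longrightarrow> (\<And>s. s \<in> {a..<b} \<Longrightarrow> \<sigma> s = \<sigma> a) \<Longrightarrow> Q b"
  shows "Q T"
proof -
  have "T > 0 \<longrightarrow> (\<exists>S. finite S \<and> 0 \<in> S \<and> (\<forall>t\<in>{0..<T}. \<sigma> t = \<sigma> (Max {s\<in>S. s \<le> t})))"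
    using sw unfolding switching_signal_def by (rule spec)
  then have "\<exists>S. finite S \<and> 0 \<in> S \<and> (\<forall>t\<in>{0..<T}. \<sigma> t = \<sigma> (Max {s\<in>S. s \<le> t}))"
    using T by (rule mp)
  then obtain S where S: "finite S" "0 \<in> S" "\<And>t. t \<in> {0..<T} \<Longrightarrow> \<sigma> t = \<sigma> (Max {s\<in>S. s \<le> t})"
    by (elim exE conjE) blast
  define S' where "S' = {s\<in>S. 0 \<le> s \<and> s < T} \<union> {T}"
  have fS': "finite S'" unfolding S'_def using S(1) by auto
  have S'0: "0 \<in> S'" unfolding S'_def using S(2) T by auto
  have S'T: "T \<in> S'" unfolding S'_def by auto
  have S'r: "0 \<le> s \<and> s \<le> T" if "s \<in> S'" for s using that T unfolding S'_def by auto
  have main: "\<forall>a\<in>S'. card {s\<in>S'. s < a} = n \<longrightarrow> Q a" for n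
  proof (induction n rule: less_induct)
    case (less n)
    show ?case
    proof (intro ballI impI)
      fix a assume a: "a \<in> S'" and cn: "card {s\<in>S'. s < a} = n"
      show "Q a"
      proof (cases "{s\<in>S'. s < a} = {}")
        case True
        then have "\<not> 0 < a" using S'0 by blast
        then have "a \<le> 0" by simp
        then have "a = 0" using S'r[OF a] by simp
        then show ?thesis using Q0 by simp
      next
        case False
        have fin: "finite {s\<in>S'. s < a}" using fS' by simp
        define a0 where "a0 = Max {s\<in>S'. s < a}"
        have a0: "a0 \<in> S'" "a0 < a" using Max_in[OF fin False] unfolding a0_def by auto
        have a0max: "s \<le> a0" if "s \<in> S'" "s < a" for s unfolding a0_def using fin that by (intro Max_ge) auto
        have sub: "{s\<in>S'. s < a0} \<subset> {s\<in>S'. s < a}" using a0 by auto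
        have lt: "card {s\<in>S'. s < a0} < n" using psubset_card_mono[OF fin sub] cn by simp
        have Qa0: "Q a0" using less.IH[OF lt] a0(1) by blast
        show ?thesis
        proof (rule step[OF _ a0(2) _ Qa0])
          show "0 \<le> a0" "a \<le> T" using S'r a0(1) a by auto
          fix s assume s: "s \<in> {a0..<a}"
          have a0T: "a0 < T" using a0(2) S'r[OF a] by simp
          have sT: "s \<in> {0..<T}" using s S'r[OF a] S'r[OF a0(1)] by auto
          have eq: "{x\<in>S. x \<le> s} = {x\<in>S. x \<le> a0}"
          proof (intro set_eqI iffI)
            fix x assume x: "x \<in> {x\<in>S. x \<le> s}"
            show "x \<in> {x\<in>S. x \<le> a0}"
            proof (rule ccontr)
              assume "x \<notin> {x\<in>S. x \<le> a0}"
              then have xa0: "x > a0" using x by auto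
              have xS: "x \<in> S'" unfolding S'_def using x sT S'r[OF a0(1)] xa0 by auto
              have xa: "x < a" using x s by auto
              show False using a0max[OF xS xa] xa0 by simp
            qed
          next
            fix x assume "x \<in> {x\<in>S. x \<le> a0}"
            then show "x \<in> {x\<in>S. x \<le> s}" using s by auto
          qed
          have "\<sigma> a0 = \<sigma> (Max {x\<in>S. x \<le> a0})" using a0T S'r[OF a0(1)] by (intro S(3)) auto
          then show "\<sigma> s = \<sigma> a0" using S(3)[OF sT] eq by simp
        qed
      qed
    qed
  qed
  show ?thesis using main S'T by blast
qed

context
  fixes f :: "'p::finite \<Rightarrow> real^'n \<Rightarrow> real^'n" and \<sigma> :: "real \<Rightarrow> 'p"
  assumes C1: "\<And>p. continuously_differentiable (f p)"
    and fc: "\<And>p. forward_complete (f p)"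
    and sw: "switching_signal \<sigma>"
begin

lemma f_lip: "\<exists>L>0. \<forall>p. \<forall>x\<in>cball 0 R. \<forall>y\<in>cball 0 R. norm (f p x - f p y) \<le> L * norm (x - y)"
  by (rule finite_max_bound[OF C1_lip1[OF C1]])
     (meson mult_right_mono norm_ge_zero order_trans)

lemma f_bdd: "\<exists>B>0. \<forall>p. \<forall>x\<in>cball 0 R. norm (f p x) \<le> B"
  by (rule finite_max_bound[OF C1_bdd1[OF C1]]) (meson order_trans)

definition fsol where
  "fsol x T \<xi> \<longleftrightarrow> \<xi> 0 = x \<and> continuous_on {0..T} \<xi> \<and>
     (\<forall>t\<in>{0..<T}. (\<xi> has_vector_derivative f (\<sigma> t) (\<xi> t)) (at_right t))"

lemma fsol_restrict: "fsol x T \<xi> \<Longrightarrow> T' \<le> T \<Longrightarrow> fsol x T' \<xi>"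
  unfolding fsol_def by (auto intro: continuous_on_subset)

lemma bounded_on_interval:
  fixes \<xi> :: "real \<Rightarrow> real^'n"
  assumes "continuous_on {a..b} \<xi>"
  shows "\<exists>R. \<forall>s\<in>{a..b}. norm (\<xi> s) \<le> R"
proof -
  have "compact (\<xi> ` {a..b})" by (intro compact_continuous_image assms) auto
  then have "bounded (\<xi> ` {a..b})" by (rule compact_imp_bounded)
  then obtain B where "\<forall>y\<in>\<xi> ` {a..b}. norm y \<le> B" unfolding bounded_iff by blast
  then show ?thesis by auto
qed

lemma fsol_unique:
  assumes s1: "fsol x T \<xi>1" and s2: "fsol x T \<xi>2" and s: "s \<in> {0..T}"
  shows "\<xi>1 s = \<xi>2 s"
proof -
  obtain R1 where R1: "\<And>s. s \<in> {0..T} \<Longrightarrow> norm (\<xi>1 s) \<le> R1"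
    using bounded_on_interval s1 unfolding fsol_def by blast
  obtain R2 where R2: "\<And>s. s \<in> {0..T} \<Longrightarrow> norm (\<xi>2 s) \<le> R2"
    using bounded_on_interval s2 unfolding fsol_def by blast
  define R where "R = max R1 R2"
  obtain L where L: "L > 0" "\<And>p x y. x \<in> cball 0 R \<Longrightarrow> y \<in> cball 0 R \<Longrightarrow> norm (f p x - f p y) \<le> L * norm (x - y)"
    using f_lip by blast
  define u where "u r = norm (\<xi>1 r - \<xi>2 r)" for r
  have "u s * exp (- (L * s)) \<le> u 0 * exp (- (L * 0))"
  proof (rule gronwall[where k="\<lambda>_. L" and c=1])
    show "0 \<le> s" using s by simp
    show "continuous_on {0..s} u" unfolding u_def using s1 s2 s unfolding fsol_def
      by (intro continuous_intros) (auto intro: continuous_on_subset)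
    show "continuous_on {0..s} (\<lambda>r. L * r)" by (intro continuous_intros)
    fix t assume t: "t \<in> {0..<s}"
    show "((\<lambda>r. L * r) has_real_derivative L) (at t within {t<..})"
      by (auto intro!: derivative_eq_intros)
    fix \<epsilon> :: real assume e: "\<epsilon> > 0"
    have tT: "t \<in> {0..<T}" using t s by auto
    define d where "d = f (\<sigma> t) (\<xi>1 t) - f (\<sigma> t) (\<xi>2 t)"
    have der: "((\<lambda>r. \<xi>1 r - \<xi>2 r) has_vector_derivative d) (at_right t)"
      unfolding d_def using s1 s2 tT unfolding fsol_def by (auto intro!: derivative_eq_intros)
    have nd: "norm d \<le> L * u t"
      unfolding d_def u_def using tT R1[of t] R2[of t] by (intro L(2)) (auto simp: R_def le_max_iff_disj)
    show "eventually (\<lambda>r. u r \<le> u t + (r - t) * (L * u t + \<epsilon>)) (at_right t)"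
      using vderiv_approx[OF der e] eventually_at_right_less[of t]
    proof eventually_elim
      case (elim r)
      have "u r \<le> norm ((\<xi>1 t - \<xi>2 t) + (r - t) *\<^sub>R d) + (r - t) * \<epsilon>"
        using elim(1) norm_triangle_ineq2[of "\<xi>1 r - \<xi>2 r" "(\<xi>1 t - \<xi>2 t) + (r - t) *\<^sub>R d"]
        unfolding u_def by linarith
      also have "\<dots> \<le> u t + (r - t) * norm d + (r - t) * \<epsilon>"
        unfolding u_def using elim(2) by (intro add_right_mono order_trans[OF norm_triangle_ineq]) simp
      also have "\<dots> \<le> u t + (r - t) * (L * u t) + (r - t) * \<epsilon>"
        using elim(2) nd by (intro add_right_mono add_left_mono mult_left_mono) auto
      finally show ?case by (simp add: algebra_simps)
    qed
  qed simp
  moreover have "u 0 = 0" unfolding u_def using s1 s2 unfolding fsol_def by simp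
  ultimately have "u s \<le> 0" by (simp add: mult_le_0_iff)
  then show ?thesis unfolding u_def by simp
qed


lemma fsol_exists: assumes T: "T > 0" shows "\<exists>\<xi>. fsol x T \<xi>"
proof (rule switching_induct[OF sw T, where Q="\<lambda>a. \<exists>\<xi>. fsol x a \<xi>"])
  show "\<exists>\<xi>. fsol x 0 \<xi>" by (rule exI[of _ "\<lambda>_. x"]) (simp add: fsol_def)
next
  fix a b assume a0: "0 \<le> a" and ab: "a < b" and bT: "b \<le> T" and Qa: "\<exists>\<xi>. fsol x a \<xi>"
    and const: "\<And>s. s \<in> {a..<b} \<Longrightarrow> \<sigma> s = \<sigma> a"
  obtain \<xi>1 where s1: "fsol x a \<xi>1" using Qa by blast
  define q where "q = \<sigma> a"
  obtain y where y0: "y 0 = \<xi>1 a" and yd: "\<And>t. t \<ge> 0 \<Longrightarrow> (y has_vector_derivative f q (y t)) (at t within {0..})"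
    using fc[of q] unfolding forward_complete_def by blast
  have yc: "continuous_on {0..} y"
    using yd by (auto simp: continuous_on_eq_continuous_within intro: has_vector_derivative_continuous)
  define \<xi> where "\<xi> t = (if t \<le> a then \<xi>1 t else y (t - a))" for t
  have "fsol x b \<xi>" unfolding fsol_def
  proof (intro conjI ballI)
    show "\<xi> 0 = x" using s1 a0 unfolding \<xi>_def fsol_def by simp
    show "continuous_on {0..b} \<xi>" unfolding \<xi>_def
    proof (rule continuous_on_cases_le[where h="\<lambda>t. t", OF _ _ continuous_on_id])
      show "continuous_on {t \<in> {0..b}. t \<le> a} \<xi>1"
        using s1 unfolding fsol_def by (auto intro: continuous_on_subset)
      show "continuous_on {t \<in> {0..b}. a \<le> t} (\<lambda>t. y (t - a))"
        by (rule continuous_on_compose2[OF yc]) (auto intro!: continuous_intros)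
      show "\<And>t. t \<in> {0..b} \<Longrightarrow> t = a \<Longrightarrow> \<xi>1 t = y (t - a)" using y0 by simp
    qed
    fix t assume t: "t \<in> {0..<b}"
    show "(\<xi> has_vector_derivative f (\<sigma> t) (\<xi> t)) (at_right t)"
    proof (cases "t < a")
      case True
      have "(\<xi>1 has_vector_derivative f (\<sigma> t) (\<xi>1 t)) (at_right t)"
        using s1 t True unfolding fsol_def by auto
      then have "(\<xi>1 has_vector_derivative f (\<sigma> t) (\<xi>1 t)) (at t within {t..b})"
        using at_right_Icc[of t b] t by simp
      then have "(\<xi> has_vector_derivative f (\<sigma> t) (\<xi>1 t)) (at t within {t..b})"
        by (rule has_vector_derivative_transform_within[where d="a - t"])
           (use True t in \<open>auto simp: \<xi>_def dist_real_def\<close>)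
      then show ?thesis using at_right_Icc[of t b] t True by (simp add: \<xi>_def)
    next
      case False
      then have ta: "a \<le> t" by simp
      have sq: "\<sigma> t = q" unfolding q_def using const[of t] t ta by simp
      have d1: "((\<lambda>r. r - a) has_vector_derivative 1) (at t within {t..b})"
        by (auto intro!: derivative_eq_intros)
      have d2: "(y has_vector_derivative f q (y (t - a))) (at ((\<lambda>r. r - a) t) within (\<lambda>r. r - a) ` {t..b})"
        by (rule has_vector_derivative_within_subset[OF yd]) (use ta in auto)
      have "((y \<circ> (\<lambda>r. r - a)) has_vector_derivative 1 *\<^sub>R f q (y (t - a))) (at t within {t..b})"
        by (rule vector_diff_chain_within[OF d1 d2])
      then have "((\<lambda>r. y (r - a)) has_vector_derivative f q (y (t - a))) (at t within {t..b})"
        by (simp add: o_def)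
      moreover have eqr: "y (r - a) = \<xi> r" if r: "r \<in> {t..b}" for r
      proof (cases "r \<le> a")
        case True
        then have "r = a" using r ta by simp
        then show ?thesis using y0 by (simp add: \<xi>_def)
      qed (simp add: \<xi>_def)
      ultimately have "(\<xi> has_vector_derivative f q (y (t - a))) (at t within {t..b})"
        using has_vector_derivative_transform_within[where d=1 and S="{t..b}" and x=t and f="\<lambda>r. y (r - a)" and g=\<xi>] t
        by simp
      moreover have "\<xi> t = y (t - a)" using ta y0 by (cases "t = a") (auto simp: \<xi>_def)
      ultimately show ?thesis using at_right_Icc[of t b] t sq by simp
    qed
  qed
  then show "\<exists>\<xi>. fsol x b \<xi>" by blast
qed

lemma sol_exists: "\<exists>\<xi>. switched_sol f \<sigma> x \<xi>"
proof -
  define \<Xi> where "\<Xi> T = (SOME \<xi>. fsol x T \<xi>)" for T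
  have fs: "fsol x T (\<Xi> T)" if "T > 0" for T
    unfolding \<Xi>_def using fsol_exists[OF that] by (rule someI_ex)
  define \<xi> where "\<xi> t = \<Xi> (t + 1) t" for t
  have agree: "\<xi> r = \<Xi> (t0 + 2) r" if "t0 \<ge> 0" "r \<in> {0..t0+1}" for t0 r
  proof -
    have "fsol x (r + 1) (\<Xi> (r + 1))" using that by (intro fs) auto
    moreover have "fsol x (r + 1) (\<Xi> (t0 + 2))" using that by (intro fsol_restrict[OF fs]) auto
    ultimately show ?thesis unfolding \<xi>_def using that by (intro fsol_unique) auto
  qed
  have "switched_sol f \<sigma> x \<xi>" unfolding switched_sol_def
  proof (intro conjI allI impI)
    show "\<xi> 0 = x" unfolding \<xi>_def using fs[of 1] unfolding fsol_def by simp
    show "continuous_on {0..} \<xi>"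
      unfolding continuous_on_eq_continuous_within
    proof
      fix t0 :: real assume t0: "t0 \<in> {0..}"
      have eq: "at t0 within {0..} = at t0 within {0..t0+2}"
        by (rule at_within_nhd[of _ "{..<t0+1}"]) (use t0 in auto)
      have "continuous (at t0 within {0..t0+2}) (\<Xi> (t0 + 2))"
        using fs[of "t0 + 2"] t0 unfolding fsol_def continuous_on_eq_continuous_within by auto
      moreover have "\<Xi> (t0 + 2) r = \<xi> r" if "r \<in> {0..t0+2}" "dist r t0 < 1" for r
      proof -
        have "r \<in> {0..t0+1}" using that by (auto simp: dist_real_def)
        then show ?thesis using agree[of t0 r] t0 by simp
      qed
      ultimately have "continuous (at t0 within {0..t0+2}) \<xi>"
        using continuous_transform_within[where \<delta>=1 and x=t0 and s="{0..t0+2}" and f="\<Xi> (t0 + 2)" and g=\<xi>] t0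
        by simp
      then show "continuous (at t0 within {0..}) \<xi>" using eq by simp
    qed
    fix t :: real assume t: "t \<ge> 0"
    have "(\<Xi> (t + 2) has_vector_derivative f (\<sigma> t) (\<Xi> (t + 2) t)) (at_right t)"
      using fs[of "t + 2"] t unfolding fsol_def by auto
    then have "(\<Xi> (t + 2) has_vector_derivative f (\<sigma> t) (\<Xi> (t + 2) t)) (at t within {t..t+2})"
      using at_right_Icc[of t "t+2"] by simp
    then have "(\<xi> has_vector_derivative f (\<sigma> t) (\<Xi> (t + 2) t)) (at t within {t..t+2})"
      by (rule has_vector_derivative_transform_within[where d=1])
         (use t agree in \<open>auto simp: dist_real_def\<close>)
    moreover have "\<Xi> (t + 2) t = \<xi> t" using agree[of t t] t by simp
    ultimately show "(\<xi> has_vector_derivative f (\<sigma> t) (\<xi> t)) (at t within {t..})"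
      using at_right_Icc[of t "t+2"] at_right_Ici[of t] by simp
  qed
  then show ?thesis by blast
qed

lemma sol_fsol: "switched_sol f \<sigma> x \<xi> \<Longrightarrow> fsol x T \<xi>"
  unfolding switched_sol_def fsol_def using at_right_Ici
  by (auto intro: continuous_on_subset)

lemma sol_unique: "switched_sol f \<sigma> x \<xi>1 \<Longrightarrow> switched_sol f \<sigma> x \<xi>2 \<Longrightarrow> t \<ge> 0 \<Longrightarrow> \<xi>1 t = \<xi>2 t"
  by (rule fsol_unique[OF sol_fsol sol_fsol, of _ _ _ t]) auto

lemma flow_eq: assumes "switched_sol f \<sigma> x \<xi>" "t \<ge> 0" shows "switched_flow f \<sigma> t x = \<xi> t"
  unfolding switched_flow_def
proof (rule the_equality)
  show "\<exists>\<xi>'. switched_sol f \<sigma> x \<xi>' \<and> \<xi>' t = \<xi> t" using assms by blast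
  fix y assume "\<exists>\<xi>'. switched_sol f \<sigma> x \<xi>' \<and> \<xi>' t = y"
  then show "y = \<xi> t" using sol_unique assms by blast
qed

lemma flow_sol: "switched_sol f \<sigma> x (\<lambda>t. switched_flow f \<sigma> t x)"
proof -
  obtain \<xi> where s: "switched_sol f \<sigma> x \<xi>" using sol_exists by blast
  have eq: "switched_flow f \<sigma> t x = \<xi> t" if "t \<ge> 0" for t using flow_eq[OF s that] .
  show ?thesis unfolding switched_sol_def
  proof (intro conjI allI impI)
    show "switched_flow f \<sigma> 0 x = x" using eq[of 0] s unfolding switched_sol_def by simp
    have "continuous_on {0..} \<xi>" using s unfolding switched_sol_def by blast
    moreover have "\<And>t. t \<in> {0..} \<Longrightarrow> \<xi> t = switched_flow f \<sigma> t x" using eq by simp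
    ultimately show "continuous_on {0..} (\<lambda>t. switched_flow f \<sigma> t x)"
      using continuous_on_cong[of "{0..}" "{0..}" \<xi> "\<lambda>t. switched_flow f \<sigma> t x"] by simp
    fix t :: real assume t: "t \<ge> 0"
    have "(\<xi> has_vector_derivative f (\<sigma> t) (\<xi> t)) (at t within {t..})" using s t unfolding switched_sol_def by blast
    then have "((\<lambda>t. switched_flow f \<sigma> t x) has_vector_derivative f (\<sigma> t) (\<xi> t)) (at t within {t..})"
      using has_vector_derivative_transform_within[where d=1 and S="{t..}" and x=t and f=\<xi> and g="\<lambda>t. switched_flow f \<sigma> t x"] t eq
      by simp
    then show "((\<lambda>t. switched_flow f \<sigma> t x) has_vector_derivative f (\<sigma> t) (switched_flow f \<sigma> t x)) (at t within {t..})"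
      using eq[OF t] by simp
  qed
qed

end


lemma hull_close:
  fixes g h :: "'a \<Rightarrow> real^'n"
  assumes d: "\<And>x. x \<in> K \<Longrightarrow> norm (g x - h x) \<le> \<delta>" and v: "v \<in> convex hull (g ` K)"
  shows "\<exists>w\<in>convex hull (h ` K). norm (v - w) \<le> \<delta>"
proof -
  define C where "C = (\<Union>w\<in>convex hull (h ` K). \<Union>z\<in>cball 0 \<delta>. {w + z})"
  have cC: "convex C" unfolding C_def by (intro convex_sums convex_convex_hull convex_cball)
  have "g ` K \<subseteq> C"
  proof
    fix y assume "y \<in> g ` K"
    then obtain x where x: "x \<in> K" "y = g x" by blast
    have "h x \<in> convex hull (h ` K)" using x(1) by (intro hull_inc) auto
    moreover have "g x - h x \<in> cball 0 \<delta>" using d[OF x(1)] by (simp add: dist_norm norm_minus_commute)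
    ultimately show "y \<in> C" unfolding C_def using x(2) by force
  qed
  then have "convex hull (g ` K) \<subseteq> C" using cC by (intro hull_minimal)
  then have "v \<in> C" using v by blast
  then obtain w z where "w \<in> convex hull (h ` K)" "z \<in> cball 0 \<delta>" "v = w + z" unfolding C_def by blast
  then show ?thesis by (intro bexI[of _ w]) (auto simp: dist_norm)
qed

context
  fixes f :: "'p::finite \<Rightarrow> real^'n \<Rightarrow> real^'n" and \<sigma> :: "real \<Rightarrow> 'p"
  assumes C1: "\<And>p. continuously_differentiable (f p)"
    and fc: "\<And>p. forward_complete (f p)"
    and sw: "switching_signal \<sigma>"
begin

lemmas flow_sol' = flow_sol[where f=f and \<sigma>=\<sigma>, OF C1 fc sw]
lemmas f_lip' = f_lip[where f=f and \<sigma>=\<sigma>, OF C1 fc sw]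
lemmas f_bdd' = f_bdd[where f=f and \<sigma>=\<sigma>, OF C1 fc sw]
lemmas bounded_on_interval' = bounded_on_interval[where f=f and \<sigma>=\<sigma>, OF C1 fc sw]

abbreviation \<Phi> where "\<Phi> s x \<equiv> switched_flow f \<sigma> s x"

lemma Phi_0: "\<Phi> 0 x = x"
  using flow_sol'[where x=x] unfolding switched_sol_def by simp

lemma Phi_cont: "continuous_on {0..} (\<lambda>s. \<Phi> s x)"
  using flow_sol'[where x=x] unfolding switched_sol_def by simp

lemma Phi_deriv: assumes "t \<ge> 0" shows "((\<lambda>s. \<Phi> s x) has_vector_derivative f (\<sigma> t) (\<Phi> t x)) (at_right t)"
proof -
  have "((\<lambda>s. \<Phi> s x) has_vector_derivative f (\<sigma> t) (\<Phi> t x)) (at t within {t..})"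
    using flow_sol'[where x=x] assms unfolding switched_sol_def by blast
  then show ?thesis using at_right_Ici[of t] by simp
qed

lemma dini_lip:
  fixes \<xi>1 \<xi>2 :: "real \<Rightarrow> real^'n"
  assumes d1: "(\<xi>1 has_vector_derivative f p (\<xi>1 t)) (at_right t)"
    and d2: "(\<xi>2 has_vector_derivative f p (\<xi>2 t)) (at_right t)"
    and nd: "norm (f p (\<xi>1 t) - f p (\<xi>2 t)) \<le> L * norm (\<xi>1 t - \<xi>2 t)" and e: "\<epsilon> > 0"
  shows "eventually (\<lambda>r. norm (\<xi>1 r - \<xi>2 r) \<le> norm (\<xi>1 t - \<xi>2 t) + (r - t) * (L * norm (\<xi>1 t - \<xi>2 t) + \<epsilon>)) (at_right t)"
proof -
  define d where "d = f p (\<xi>1 t) - f p (\<xi>2 t)"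
  have der: "((\<lambda>r. \<xi>1 r - \<xi>2 r) has_vector_derivative d) (at_right t)"
    unfolding d_def using d1 d2 by (auto intro!: derivative_eq_intros)
  show ?thesis
    using vderiv_approx[OF der e] eventually_at_right_less[of t]
  proof eventually_elim
    case (elim r)
    have "norm (\<xi>1 r - \<xi>2 r) \<le> norm ((\<xi>1 t - \<xi>2 t) + (r - t) *\<^sub>R d) + (r - t) * \<epsilon>"
      using elim(1) norm_triangle_ineq2[of "\<xi>1 r - \<xi>2 r" "(\<xi>1 t - \<xi>2 t) + (r - t) *\<^sub>R d"]
      by linarith
    also have "\<dots> \<le> norm (\<xi>1 t - \<xi>2 t) + (r - t) * norm d + (r - t) * \<epsilon>"
      using elim(2) by (intro add_right_mono order_trans[OF norm_triangle_ineq]) simp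
    also have "\<dots> \<le> norm (\<xi>1 t - \<xi>2 t) + (r - t) * (L * norm (\<xi>1 t - \<xi>2 t)) + (r - t) * \<epsilon>"
      using elim(2) nd unfolding d_def by (intro add_right_mono add_left_mono mult_left_mono) auto
    finally show ?case by (simp add: algebra_simps)
  qed
qed

lemma local_bound:
  assumes T: "T \<ge> 0"
  shows "\<exists>\<delta>>0. \<exists>R. \<forall>x. norm (x - x0) < \<delta> \<longrightarrow> (\<forall>s\<in>{0..T}. norm (\<Phi> s x) \<le> R)"
proof -
  obtain R0 where R0: "\<And>s. s \<in> {0..T} \<Longrightarrow> norm (\<Phi> s x0) \<le> R0"
    using bounded_on_interval'[OF continuous_on_subset[OF Phi_cont]] by (metis atLeastAtMost_iff atLeast_iff subsetI)
  obtain L where L: "L > 0" "\<And>p x y. x \<in> cball 0 (R0 + 1) \<Longrightarrow> y \<in> cball 0 (R0 + 1) \<Longrightarrow> norm (f p x - f p y) \<le> L * norm (x - y)"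
    using f_lip' by blast
  define \<delta> where "\<delta> = exp (- (L * T)) / 2"
  have \<delta>0: "\<delta> > 0" unfolding \<delta>_def by simp
  have "norm (\<Phi> s x) \<le> R0 + 1" if x: "norm (x - x0) < \<delta>" and s: "s \<in> {0..T}" for x s
  proof -
    define u where "u r = norm (\<Phi> r x - \<Phi> r x0)" for r
    have "u s * exp (- (L * s)) \<le> u 0 * exp (- (L * 0))"
    proof (rule gronwall[where k="\<lambda>_. L" and c=\<delta>])
      show "0 \<le> s" using s by simp
      show "continuous_on {0..s} u" unfolding u_def
        by (intro continuous_intros continuous_on_subset[OF Phi_cont]) auto
      show "continuous_on {0..s} (\<lambda>r. L * r)" by (intro continuous_intros)
      show "\<delta> > 0" by (rule \<delta>0)
      fix t assume t: "t \<in> {0..<s}"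
      show "((\<lambda>r. L * r) has_real_derivative L) (at t within {t<..})"
        by (auto intro!: derivative_eq_intros)
      fix \<epsilon> :: real assume lt: "u t * exp (- (L * t)) < u 0 * exp (- (L * 0)) + \<delta>" and e: "\<epsilon> > 0"
      have "u t < 1"
      proof -
        have "u 0 < \<delta>" unfolding u_def using x by (simp add: Phi_0)
        then have "u t * exp (- (L * t)) < exp (- (L * T))" using lt unfolding \<delta>_def by simp
        also have "\<dots> \<le> exp (- (L * t))" using t s L(1) by (simp add: mult_left_mono)
        finally show ?thesis by simp
      qed
      then have inb: "\<Phi> t x \<in> cball 0 (R0 + 1)" "\<Phi> t x0 \<in> cball 0 (R0 + 1)"
        using R0[of t] t s norm_triangle_ineq2[of "\<Phi> t x" "\<Phi> t x0"] unfolding u_def by auto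
      have t0: "0 \<le> t" using t by simp
      show "eventually (\<lambda>r. u r \<le> u t + (r - t) * (L * u t + \<epsilon>)) (at_right t)"
        unfolding u_def by (rule dini_lip[OF Phi_deriv[OF t0] Phi_deriv[OF t0] L(2)[OF inb] e])
    qed
    then have "u s \<le> norm (x - x0) * exp (L * s)" unfolding u_def by (simp add: Phi_0 field_simps exp_minus)
    also have "\<dots> \<le> \<delta> * exp (L * T)" using x s L(1) \<delta>0 by (intro mult_mono) auto
    also have "\<dots> = 1 / 2" unfolding \<delta>_def by (simp add: exp_minus field_simps)
    finally have "u s \<le> 1 / 2" .
    then show ?thesis using R0[OF s] norm_triangle_ineq2[of "\<Phi> s x" "\<Phi> s x0"] unfolding u_def by auto
  qed
  then show ?thesis using \<delta>0 by blast
qed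

lemma uniform_bound:
  assumes K: "compact K" and T: "T \<ge> 0"
  shows "\<exists>R. \<forall>x\<in>K. \<forall>s\<in>{0..T}. norm (\<Phi> s x) \<le> R"
proof -
  have "\<forall>x0. \<exists>\<delta> R. \<delta> > 0 \<and> (\<forall>x. norm (x - x0) < \<delta> \<longrightarrow> (\<forall>s\<in>{0..T}. norm (\<Phi> s x) \<le> R))"
    using local_bound[OF T] by blast
  then obtain \<delta> Rf where dR: "\<And>x0. \<delta> x0 > 0" "\<And>x0 x s. norm (x - x0) < \<delta> x0 \<Longrightarrow> s \<in> {0..T} \<Longrightarrow> norm (\<Phi> s x) \<le> Rf x0"
    by metis
  have cov: "K \<subseteq> \<Union> ((\<lambda>c. ball c (\<delta> c)) ` K)" using dR(1) by force
  obtain C where C: "C \<subseteq> K" "finite C" "K \<subseteq> \<Union> ((\<lambda>c. ball c (\<delta> c)) ` C)"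
    by (rule compactE_image[OF K _ cov]) auto
  define R where "R = (\<Sum>c\<in>C. \<bar>Rf c\<bar>)"
  have "norm (\<Phi> s x) \<le> R" if x: "x \<in> K" and s: "s \<in> {0..T}" for x s
  proof -
    obtain c where c: "c \<in> C" "x \<in> ball c (\<delta> c)" using C(3) x by blast
    have "norm (\<Phi> s x) \<le> Rf c" using dR(2)[of x c s] c(2) s by (simp add: dist_norm norm_minus_commute)
    also have "\<dots> \<le> \<bar>Rf c\<bar>" by simp
    also have "\<dots> \<le> R" unfolding R_def by (rule member_le_sum) (use c C in auto)
    finally show ?thesis .
  qed
  then show ?thesis by blast
qed

lemma time_lip:
  assumes B: "\<And>p y. y \<in> cball 0 R \<Longrightarrow> norm (f p y) \<le> B"
    and R: "\<And>s. s \<in> {a..b} \<Longrightarrow> norm (\<Phi> s x) \<le> R" and a: "0 \<le> a" and ab: "a \<le> b"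
  shows "norm (\<Phi> b x - \<Phi> a x) \<le> B * (b - a)"
proof -
  define \<phi> where "\<phi> r = norm (\<Phi> r x - \<Phi> a x) - B * (r - a)" for r
  have "\<phi> b \<le> \<phi> a"
  proof (rule cmp[OF ab _ zero_less_one])
    show "continuous_on {a..b} \<phi>" unfolding \<phi>_def
      by (intro continuous_intros continuous_on_subset[OF Phi_cont]) (use a in auto)
    fix t \<epsilon> :: real assume t: "t \<in> {a..<b}" and e: "\<epsilon> > 0"
    have nd: "norm (f (\<sigma> t) (\<Phi> t x)) \<le> B" using B R[of t] t by auto
    have t0: "0 \<le> t" using t a by simp
    show "eventually (\<lambda>r. \<phi> r \<le> \<phi> t + (r - t) * \<epsilon>) (at_right t)"
      using vderiv_approx[OF Phi_deriv[where x=x, OF t0] e] eventually_at_right_less[of t]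
    proof eventually_elim
      case (elim r)
      have "norm (\<Phi> r x - \<Phi> a x) \<le> norm (\<Phi> t x - \<Phi> a x) + norm (\<Phi> r x - \<Phi> t x)"
        using norm_triangle_ineq[of "\<Phi> t x - \<Phi> a x" "\<Phi> r x - \<Phi> t x"] by simp
      also have "norm (\<Phi> r x - \<Phi> t x) \<le> norm ((r - t) *\<^sub>R f (\<sigma> t) (\<Phi> t x)) + (r - t) * \<epsilon>"
        using elim(1) norm_triangle_ineq2[of "\<Phi> r x - \<Phi> t x" "(r - t) *\<^sub>R f (\<sigma> t) (\<Phi> t x)"]
        by (simp add: algebra_simps)
      also have "norm ((r - t) *\<^sub>R f (\<sigma> t) (\<Phi> t x)) \<le> (r - t) * B"
        using elim(2) nd by (simp add: mult_left_mono)
      finally show ?case unfolding \<phi>_def by (simp add: algebra_simps)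
    qed
  qed
  then show ?thesis unfolding \<phi>_def by simp
qed


lemma hull_bound: "(\<And>x. x \<in> K \<Longrightarrow> norm (\<Phi> s x) \<le> R) \<Longrightarrow> convex hull (\<Phi> s ` K) \<subseteq> cball 0 R"
  by (intro hull_minimal convex_cball) auto

lemma cont_bounded_cball:
  fixes g :: "real^'n \<Rightarrow> real"
  assumes "continuous_on UNIV g"
  shows "\<exists>M. \<forall>v\<in>cball 0 R. \<bar>g v\<bar> \<le> M"
proof -
  have "compact (g ` cball 0 R)" by (intro compact_continuous_image continuous_on_subset[OF assms]) auto
  then have "bounded (g ` cball 0 R)" by (rule compact_imp_bounded)
  then obtain M where "\<forall>y\<in>g ` cball 0 R. norm y \<le> M" unfolding bounded_iff by blast
  then show ?thesis by auto
qed

lemma G_bdd: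
  fixes g :: "real^'n \<Rightarrow> real"
  assumes K: "compact K" and g: "continuous_on UNIV g" and s: "s \<ge> 0"
  shows "bdd_above (g ` (convex hull (\<Phi> s ` K)))" "bdd_below (g ` (convex hull (\<Phi> s ` K)))"
proof -
  obtain R where R: "\<And>x r. x \<in> K \<Longrightarrow> r \<in> {0..s} \<Longrightarrow> norm (\<Phi> r x) \<le> R" using uniform_bound[OF K s] by blast
  have sub: "convex hull (\<Phi> s ` K) \<subseteq> cball 0 R" using R s by (intro hull_bound) auto
  obtain M where M: "\<And>v. v \<in> cball 0 R \<Longrightarrow> \<bar>g v\<bar> \<le> M" using cont_bounded_cball[OF g] by blast
  show "bdd_above (g ` (convex hull (\<Phi> s ` K)))" using sub M by (intro bdd_aboveI2[where M=M]) (auto simp: abs_le_iff)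
  show "bdd_below (g ` (convex hull (\<Phi> s ` K)))" using sub M by (intro bdd_belowI2[where m="-M"]) (force simp: abs_le_iff)
qed

lemma G_cont:
  fixes g :: "real^'n \<Rightarrow> real"
  assumes K: "compact K" "K \<noteq> {}" and g: "continuous_on UNIV g" and T: "T \<ge> 0"
  shows "continuous_on {0..T} (\<lambda>s. SUP v\<in>convex hull (\<Phi> s ` K). g v)"
proof -
  obtain R where R: "\<And>x s. x \<in> K \<Longrightarrow> s \<in> {0..T} \<Longrightarrow> norm (\<Phi> s x) \<le> R" using uniform_bound[OF K(1) T] by blast
  obtain B where B: "B > 0" "\<And>p y. y \<in> cball 0 R \<Longrightarrow> norm (f p y) \<le> B" using f_bdd' by blast
  have tl: "norm (\<Phi> s' x - \<Phi> s x) \<le> B * \<bar>s' - s\<bar>" if "x \<in> K" "s \<in> {0..T}" "s' \<in> {0..T}" for x s s'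
  proof (cases "s \<le> s'")
    case True then show ?thesis using time_lip[OF B(2), where a=s and b=s' and x=x] R that by auto
  next
    case False then show ?thesis using time_lip[OF B(2), where a=s' and b=s and x=x] R that by (auto simp: norm_minus_commute)
  qed
  have uc: "uniformly_continuous_on (cball 0 (R + 1)) g"
    by (intro compact_uniformly_continuous continuous_on_subset[OF g]) auto
  have sub: "convex hull (\<Phi> s ` K) \<subseteq> cball 0 R" if "s \<in> {0..T}" for s
    using R that by (intro hull_bound) auto
  have ne: "convex hull (\<Phi> s ` K) \<noteq> {}" for s using K(2) by simp
  have bdd: "bdd_above (g ` (convex hull (\<Phi> s ` K)))" if "s \<in> {0..T}" for s
    using G_bdd(1)[OF K(1) g] that by auto
  have one: "(SUP v\<in>convex hull (\<Phi> s' ` K). g v) \<le> (SUP v\<in>convex hull (\<Phi> s ` K). g v) + e"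
    if s: "s \<in> {0..T}" "s' \<in> {0..T}" and d: "d > 0" and dd: "B * \<bar>s' - s\<bar> < d"
      and ud: "\<And>v w. v \<in> cball 0 (R + 1) \<Longrightarrow> w \<in> cball 0 (R + 1) \<Longrightarrow> dist v w < d \<Longrightarrow> dist (g v) (g w) < e"
    for s s' d e
  proof (rule cSUP_least[OF ne])
    fix v assume v: "v \<in> convex hull (\<Phi> s' ` K)"
    obtain w where w: "w \<in> convex hull (\<Phi> s ` K)" "norm (v - w) \<le> B * \<bar>s' - s\<bar>"
      using hull_close[OF _ v, of "\<lambda>x. \<Phi> s x"] tl s by blast
    have "v \<in> cball 0 (R + 1)" "w \<in> cball 0 (R + 1)" using sub s v w(1) by force+
    moreover have "dist v w < d" using w(2) dd by (simp add: dist_norm)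
    ultimately have "g v < g w + e" using ud by (force simp: dist_real_def)
    also have "g w \<le> (SUP v\<in>convex hull (\<Phi> s ` K). g v)" by (rule cSUP_upper[OF w(1) bdd[OF s(1)]])
    finally show "g v \<le> (SUP v\<in>convex hull (\<Phi> s ` K). g v) + e" by simp
  qed
  show ?thesis unfolding continuous_on_iff
  proof (intro ballI allI impI)
    fix s e :: real assume s: "s \<in> {0..T}" and e: "e > 0"
    obtain d where d: "d > 0" "\<And>v w. v \<in> cball 0 (R + 1) \<Longrightarrow> w \<in> cball 0 (R + 1) \<Longrightarrow> dist v w < d \<Longrightarrow> dist (g v) (g w) < e / 2"
      using uc e unfolding uniformly_continuous_on_def by (metis half_gt_zero)
    show "\<exists>\<delta>>0. \<forall>s'\<in>{0..T}. dist s' s < \<delta> \<longrightarrow>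
            dist (SUP v\<in>convex hull (\<Phi> s' ` K). g v) (SUP v\<in>convex hull (\<Phi> s ` K). g v) < e"
    proof (intro exI[of _ "d / (B + 1)"] conjI ballI impI)
      show "d / (B + 1) > 0" using d B by simp
      fix s' assume s': "s' \<in> {0..T}" and ds: "dist s' s < d / (B + 1)"
      have "B * \<bar>s' - s\<bar> \<le> B * (d / (B + 1))" using ds B by (intro mult_left_mono) (auto simp: dist_real_def)
      also have "\<dots> < d" using d B by (simp add: field_simps)
      finally have dd: "B * \<bar>s' - s\<bar> < d" .
      have dd2: "B * \<bar>s - s'\<bar> < d" using dd by (simp add: abs_minus_commute)
      have "(SUP v\<in>convex hull (\<Phi> s' ` K). g v) \<le> (SUP v\<in>convex hull (\<Phi> s ` K). g v) + e / 2"
        by (rule one[OF s s' d(1) dd d(2)])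
      moreover have "(SUP v\<in>convex hull (\<Phi> s ` K). g v) \<le> (SUP v\<in>convex hull (\<Phi> s' ` K). g v) + e / 2"
        by (rule one[OF s' s d(1) dd2 d(2)])
      ultimately show "dist (SUP v\<in>convex hull (\<Phi> s' ` K). g v) (SUP v\<in>convex hull (\<Phi> s ` K). g v) < e"
        using e by (simp add: dist_real_def abs_le_iff)
    qed
  qed
qed

end


lemma sw_obtain:
  fixes \<sigma> :: "real \<Rightarrow> 'p"
  assumes sw: "switching_signal \<sigma>" and T: "T > 0"
  obtains S where "finite S" "0 \<in> S" "\<And>t. t \<in> {0..<T} \<Longrightarrow> \<sigma> t = \<sigma> (Max {s\<in>S. s \<le> t})"
proof -
  have "T > 0 \<longrightarrow> (\<exists>S. finite S \<and> 0 \<in> S \<and> (\<forall>t\<in>{0..<T}. \<sigma> t = \<sigma> (Max {s\<in>S. s \<le> t})))"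
    using sw unfolding switching_signal_def by (rule spec)
  then have "\<exists>S. finite S \<and> 0 \<in> S \<and> (\<forall>t\<in>{0..<T}. \<sigma> t = \<sigma> (Max {s\<in>S. s \<le> t}))"
    using T by (rule mp)
  then obtain S where "finite S" "0 \<in> S" "\<forall>t\<in>{0..<T}. \<sigma> t = \<sigma> (Max {s\<in>S. s \<le> t})"
    by (elim exE conjE) blast
  then show ?thesis using that by simp
qed

lemma sw_right_const:
  fixes \<sigma> :: "real \<Rightarrow> 'p"
  assumes sw: "switching_signal \<sigma>" and t: "t \<ge> 0"
  shows "\<exists>\<delta>>0. \<forall>s\<in>{t..<t+\<delta>}. \<sigma> s = \<sigma> t"
proof -
  have t1: "t + 1 > 0" using t by simp
  obtain S where S: "finite S" "0 \<in> S" "\<And>r. r \<in> {0..<t+1} \<Longrightarrow> \<sigma> r = \<sigma> (Max {s\<in>S. s \<le> r})"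
    using sw_obtain[OF sw t1] by metis
  define U where "U = {x\<in>S. t < x} \<union> {t + 1}"
  have fU: "finite U" "U \<noteq> {}" unfolding U_def using S(1) by auto
  define m where "m = Min U"
  have allU: "\<forall>a\<in>U. t < a" unfolding U_def by auto
  have mt: "m > t" unfolding m_def using Min_gr_iff[OF fU] allU by simp
  have t1U: "t + 1 \<in> U" unfolding U_def by simp
  have m1: "m \<le> t + 1" unfolding m_def using Min_le[OF fU(1) t1U] .
  have "\<sigma> s = \<sigma> t" if s: "s \<in> {t..<t+(m-t)}" for s
  proof -
    have s1: "t \<le> s" "s < m" using s by auto
    have eq: "{x\<in>S. x \<le> s} = {x\<in>S. x \<le> t}"
    proof (intro set_eqI iffI)
      fix x assume x: "x \<in> {x\<in>S. x \<le> s}"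
      then have xS: "x \<in> S" and xs: "x \<le> s" by auto
      show "x \<in> {x\<in>S. x \<le> t}"
      proof (rule ccontr)
        assume "x \<notin> {x\<in>S. x \<le> t}"
        then have "t < x" using xS by simp
        then have xU: "x \<in> U" using xS unfolding U_def by simp
        have "m \<le> x" unfolding m_def using Min_le[OF fU(1) xU] .
        then show False using xs s1 by linarith
      qed
    next
      fix x assume "x \<in> {x\<in>S. x \<le> t}"
      then show "x \<in> {x\<in>S. x \<le> s}" using s1 by simp
    qed
    have sr: "s \<in> {0..<t+1}" using s1 t m1 by simp
    have tr: "t \<in> {0..<t+1}" using t by simp
    have "\<sigma> s = \<sigma> (Max {x\<in>S. x \<le> s})" by (rule S(3)[OF sr])
    also have "\<dots> = \<sigma> (Max {x\<in>S. x \<le> t})" by (simp only: eq)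
    also have "\<dots> = \<sigma> t" by (rule S(3)[OF tr, symmetric])
    finally show ?thesis .
  qed
  then have "\<forall>s\<in>{t..<t+(m-t)}. \<sigma> s = \<sigma> t" by blast
  moreover have "m - t > 0" using mt by simp
  ultimately show ?thesis by blast
qed

definition hh :: "(real \<Rightarrow> 'p) \<Rightarrow> (real \<Rightarrow> real) \<Rightarrow> 'p \<Rightarrow> real \<Rightarrow> real" where
  "hh \<sigma> G p s = G s * (if \<sigma> s = p then 1 else 0)"

context
  fixes \<sigma> :: "real \<Rightarrow> 'p" and G :: "real \<Rightarrow> real" and p :: 'p
  assumes sw: "switching_signal \<sigma>" and Gc: "\<And>T. T \<ge> 0 \<Longrightarrow> continuous_on {0..T} G"
begin


lemma hh_integrable: assumes t: "t \<ge> 0" shows "(hh \<sigma> G p) integrable_on {0..t}"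
proof (cases "t = 0")
  case True
  have "continuous_on {0..0} (hh \<sigma> G p)" by (simp add: continuous_on_sing)
  then show ?thesis using True by (intro integrable_continuous_real) simp
next
  case False
  then have t0: "t > 0" using t by simp
  show ?thesis
  proof (rule switching_induct[OF sw t0, where Q="\<lambda>a. (hh \<sigma> G p) integrable_on {0..a}"])
    show "(hh \<sigma> G p) integrable_on {0..0}"
      by (intro integrable_continuous_real) (simp add: continuous_on_sing)
  next
    fix a b assume a: "0 \<le> a" "a < b" "b \<le> t" "(hh \<sigma> G p) integrable_on {0..a}"
      and c: "\<And>s. s \<in> {a..<b} \<Longrightarrow> \<sigma> s = \<sigma> a"
    define cc where "cc = (if \<sigma> a = p then 1 else (0::real))"
    have "(\<lambda>s. G s * cc) integrable_on {a..b}"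
      by (intro integrable_continuous_real continuous_intros continuous_on_subset[OF Gc[of b]]) (use a in auto)
    moreover have "(hh \<sigma> G p) s = G s * cc" if "s \<in> {a..b} - {b}" for s
    proof -
      have "\<sigma> s = \<sigma> a" using that by (intro c) auto
      then show ?thesis unfolding hh_def cc_def by simp
    qed
    ultimately have "(hh \<sigma> G p) integrable_on {a..b}"
      by (intro integrable_spike_finite[of "{b}" _ "hh \<sigma> G p" "\<lambda>s. G s * cc"]) auto
    then show "(hh \<sigma> G p) integrable_on {0..b}"
      using a by (intro Henstock_Kurzweil_Integration.integrable_combine[OF a(1) _ a(4)]) auto
  qed
qed

lemma hh_deriv: assumes t: "t \<ge> 0"
  shows "((\<lambda>r. integral {0..r} (hh \<sigma> G p)) has_real_derivative (hh \<sigma> G p) t) (at t within {t<..})"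
proof -
  obtain \<delta> where \<delta>: "\<delta> > 0" "\<And>s. s \<in> {t..<t+\<delta>} \<Longrightarrow> \<sigma> s = \<sigma> t" using sw_right_const[OF sw t] by blast
  define d where "d = min \<delta> 1"
  have d: "d > 0" "d \<le> \<delta>" unfolding d_def using \<delta> by auto
  define cc where "cc = (if \<sigma> t = p then 1 else (0::real))"
  have int: "(hh \<sigma> G p) integrable_on {0..t+d}" using t d by (intro hh_integrable) auto
  have int2: "(hh \<sigma> G p) integrable_on {t..t+d}" by (rule integrable_subinterval_real[OF int]) (use t in auto)
  have "continuous (at t within {t..t+d}) (\<lambda>s. G s * cc)"
  proof -
    have "continuous_on {t..t+d} (\<lambda>s. G s * cc)"
      by (intro continuous_intros continuous_on_subset[OF Gc[of "t+d"]]) (use t d in auto)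
    then show ?thesis using d unfolding continuous_on_eq_continuous_within by auto
  qed
  moreover have "G s * cc = (hh \<sigma> G p) s" if "s \<in> {t..t+d}" "dist s t < d" for s
  proof -
    have "s \<in> {t..<t+\<delta>}" using that d by (auto simp: dist_real_def)
    then have "\<sigma> s = \<sigma> t" by (rule \<delta>(2))
    then show ?thesis unfolding hh_def cc_def by simp
  qed
  ultimately have cont: "continuous (at t within {t..t+d}) (hh \<sigma> G p)"
    using continuous_transform_within[where \<delta>=d and x=t and s="{t..t+d}" and f="\<lambda>s. G s * cc" and g="hh \<sigma> G p"] d
    by simp
  have "((\<lambda>u. integral {t..u} (hh \<sigma> G p)) has_vector_derivative (hh \<sigma> G p) t) (at t within {t..t+d} - {})"
    by (rule integral_has_vector_derivative_continuous_at[OF int2]) (use cont d in auto)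
  then have "((\<lambda>u. integral {0..t} (hh \<sigma> G p) + integral {t..u} (hh \<sigma> G p)) has_vector_derivative (hh \<sigma> G p) t) (at t within {t..t+d})"
    by (auto intro!: derivative_eq_intros)
  moreover have "integral {0..t} (hh \<sigma> G p) + integral {t..u} (hh \<sigma> G p) = integral {0..u} (hh \<sigma> G p)" if "u \<in> {t..t+d}" "dist u t < 1" for u
    using that t by (intro Henstock_Kurzweil_Integration.integral_combine integrable_subinterval_real[OF int]) auto
  ultimately have "((\<lambda>u. integral {0..u} (hh \<sigma> G p)) has_vector_derivative (hh \<sigma> G p) t) (at t within {t..t+d})"
    using has_vector_derivative_transform_within[where d=1 and S="{t..t+d}" and x=t
        and f="\<lambda>u. integral {0..t} (hh \<sigma> G p) + integral {t..u} (hh \<sigma> G p)" and g="\<lambda>u. integral {0..u} (hh \<sigma> G p)"] d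
    by simp
  then show ?thesis using at_right_Icc[of t "t+d"] d
    by (simp add: has_real_derivative_iff_has_vector_derivative)
qed

lemma hh_cont: assumes t: "t \<ge> 0" shows "continuous_on {0..t} (\<lambda>r. integral {0..r} (hh \<sigma> G p))"
  by (rule indefinite_integral_continuous_1[OF hh_integrable[OF t]])

end

lemma eta_generic:
  fixes \<sigma> :: "real \<Rightarrow> 'p::finite" and G :: "'p \<Rightarrow> real \<Rightarrow> real"
  assumes sw: "switching_signal \<sigma>" and Gc: "\<And>p T. T \<ge> 0 \<Longrightarrow> continuous_on {0..T} (G p)" and t: "t \<ge> 0"
  shows "((\<lambda>r. \<Sum>p\<in>UNIV. integral {0..r} (\<lambda>s. G p s * (if \<sigma> s = p then 1 else 0))) has_real_derivative G (\<sigma> t) t) (at t within {t<..})"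
    and "continuous_on {0..t} (\<lambda>r. \<Sum>p\<in>UNIV. integral {0..r} (\<lambda>s. G p s * (if \<sigma> s = p then 1 else 0)))"
proof -
  have "((\<lambda>r. \<Sum>p\<in>UNIV. integral {0..r} (\<lambda>s. G p s * (if \<sigma> s = p then 1 else 0))) has_real_derivative
      (\<Sum>p\<in>UNIV. G p t * (if \<sigma> t = p then 1 else 0))) (at t within {t<..})"
  proof (rule DERIV_sum)
    fix q :: 'p
    have "((\<lambda>r. integral {0..r} (hh \<sigma> (G q) q)) has_real_derivative hh \<sigma> (G q) q t) (at t within {t<..})"
      by (rule hh_deriv[where \<sigma>=\<sigma> and G="G q" and p=q, OF sw Gc t])
    then show "((\<lambda>r. integral {0..r} (\<lambda>s. G q s * (if \<sigma> s = q then 1 else 0))) has_real_derivative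
        G q t * (if \<sigma> t = q then 1 else 0)) (at t within {t<..})"
      by (simp add: hh_def[abs_def])
  qed
  moreover have "(\<Sum>p\<in>UNIV. G p t * (if \<sigma> t = p then 1 else 0)) = G (\<sigma> t) t"
    by (simp add: if_distrib cong: if_cong)
  ultimately show "((\<lambda>r. \<Sum>p\<in>UNIV. integral {0..r} (\<lambda>s. G p s * (if \<sigma> s = p then 1 else 0))) has_real_derivative G (\<sigma> t) t) (at t within {t<..})"
    by simp
  show "continuous_on {0..t} (\<lambda>r. \<Sum>p\<in>UNIV. integral {0..r} (\<lambda>s. G p s * (if \<sigma> s = p then 1 else 0)))"
  proof (intro continuous_on_sum)
    fix q :: 'p
    show "continuous_on {0..t} (\<lambda>r. integral {0..r} (\<lambda>s. G q s * (if \<sigma> s = q then 1 else 0)))"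
      using hh_cont[where \<sigma>=\<sigma> and G="G q" and p=q, OF sw Gc t] by (simp add: hh_def[abs_def])
  qed
qed


lemma mat_sum_mult: "(\<Sum>k\<in>A. M k) *v z = (\<Sum>k\<in>A. M k *v z)"
proof (induction A rule: infinite_finite_induct)
  case (insert x F) then show ?case by (simp add: matrix_vector_mult_add_rdistrib)
qed (auto simp: matrix_vector_mult_0)

lemma jac_apply:
  assumes "(g has_derivative blinfun_apply X) (at v)"
  shows "jacobian g v *v z = blinfun_apply X z"
proof -
  have "frechet_derivative g (at v) = blinfun_apply X" using frechet_derivative_at[OF assms] by simp
  moreover have "Vector_Spaces.linear (*s) (*s) (blinfun_apply X)"
    unfolding linear_matrix_vector_mul_eq by (rule bounded_linear.linear[OF blinfun.bounded_linear_right])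
  ultimately show ?thesis unfolding jacobian_def by (simp add: matrix_works)
qed

lemma linearization:
  fixes g :: "real^'n \<Rightarrow> real^'n" and g' :: "real^'n \<Rightarrow> ((real^'n) \<Rightarrow>\<^sub>L (real^'n))"
  assumes gd: "\<And>x. (g has_derivative blinfun_apply (g' x)) (at x)" and gc: "continuous_on UNIV g'"
    and e: "\<epsilon> > 0"
  shows "\<exists>n>0. norm (g B - g A - ((1 / real n) *\<^sub>R (\<Sum>k<n. jacobian g (A + (real k / real n) *\<^sub>R (B - A)))) *v (B - A))
            \<le> \<epsilon> * norm (B - A)"
proof -
  have uc: "uniformly_continuous_on (closed_segment A B) g'"
    by (intro compact_uniformly_continuous continuous_on_subset[OF gc] compact_segment) auto
  have "\<exists>d>0. \<forall>x\<in>closed_segment A B. \<forall>x'\<in>closed_segment A B. dist x' x < d \<longrightarrow> dist (g' x') (g' x) < \<epsilon>"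
    using uc e unfolding uniformly_continuous_on_def by blast
  then obtain \<delta> where \<delta>: "\<delta> > 0" "\<And>v w. v \<in> closed_segment A B \<Longrightarrow> w \<in> closed_segment A B \<Longrightarrow> dist w v < \<delta> \<Longrightarrow> dist (g' w) (g' v) < \<epsilon>"
    by blast
  obtain n0 :: nat where n0: "norm (B - A) / \<delta> < real n0" using reals_Archimedean2 by blast
  define n where "n = Suc n0"
  have n: "n > 0" "norm (B - A) / \<delta> < real n" using n0 unfolding n_def by auto
  have nd: "norm (B - A) / real n < \<delta>" using n \<delta>(1) by (simp add: field_simps)
  define v where "v k = A + (real k / real n) *\<^sub>R (B - A)" for k
  have vseg: "v k \<in> closed_segment A B" if "k \<le> n" for k
  proof -
    have "v k = (1 - real k / real n) *\<^sub>R A + (real k / real n) *\<^sub>R B" unfolding v_def by (simp add: algebra_simps)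
    moreover have "0 \<le> real k / real n" "real k / real n \<le> 1" using that n by auto
    ultimately show ?thesis unfolding in_segment by blast
  qed
  have vstep: "v (Suc k) - v k = (1 / real n) *\<^sub>R (B - A)" for k
  proof -
    have "v (Suc k) - v k = (real (Suc k) / real n - real k / real n) *\<^sub>R (B - A)"
      unfolding v_def by (simp add: scaleR_diff_left)
    also have "real (Suc k) / real n - real k / real n = 1 / real n" by (simp add: diff_divide_distrib[symmetric])
    finally show ?thesis .
  qed
  have piece: "norm (g (v (Suc k)) - g (v k) - blinfun_apply (g' (v k)) (v (Suc k) - v k)) \<le> norm (v (Suc k) - v k) * \<epsilon>"
    if k: "k < n" for k
  proof -
    define S where "S = closed_segment (v k) (v (Suc k))"
    have Ssub: "S \<subseteq> closed_segment A B" unfolding S_def using vseg k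
      by (intro closed_segment_subset convex_closed_segment) auto
    show ?thesis
    proof (rule differentiable_bound_linearization[where S=S and f'="\<lambda>x. blinfun_apply (g' x)"])
      fix t :: real assume "t \<in> {0..1}"
      then show "v k + t *\<^sub>R (v (Suc k) - v k) \<in> S" unfolding S_def in_segment
        by (intro exI[of _ t]) (auto simp: algebra_simps)
    next
      fix x assume "x \<in> S"
      show "(g has_derivative blinfun_apply (g' x)) (at x within S)" by (rule has_derivative_at_withinI[OF gd])
    next
      fix x assume x: "x \<in> S"
      have "dist x (v k) \<le> dist (v k) (v (Suc k))"
        using dist_in_closed_segment[of x "v k" "v (Suc k)"] x unfolding S_def by simp
      also have "\<dots> = norm (v (Suc k) - v k)" by (simp add: dist_norm norm_minus_commute)
      also have "\<dots> = norm (B - A) / real n" unfolding vstep by simp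
      also have "\<dots> < \<delta>" by (rule nd)
      finally have "dist (g' x) (g' (v k)) < \<epsilon>" using \<delta>(2)[of "v k" x] Ssub x vseg k by auto
      moreover have "blinfun_apply (g' x) - blinfun_apply (g' (v k)) = blinfun_apply (g' x - g' (v k))"
        by (simp add: minus_blinfun.rep_eq fun_diff_def)
      ultimately show "onorm (blinfun_apply (g' x) - blinfun_apply (g' (v k))) \<le> \<epsilon>"
        by (simp add: dist_norm norm_blinfun.rep_eq)
    next
      show "v k \<in> S" unfolding S_def by simp
    qed
  qed
  have sum1: "g B - g A = (\<Sum>k<n. g (v (Suc k)) - g (v k))"
    using sum_lessThan_telescope[of "\<lambda>k. g (v k)" n] n unfolding v_def by simp
  have sum2: "((1 / real n) *\<^sub>R (\<Sum>k<n. jacobian g (v k))) *v (B - A) = (\<Sum>k<n. blinfun_apply (g' (v k)) (v (Suc k) - v k))"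
    by (simp add: scaleR_matrix_vector_assoc[symmetric] mat_sum_mult jac_apply[OF gd] vstep
        scaleR_sum_right blinfun.scaleR_right)
  have "norm (g B - g A - ((1 / real n) *\<^sub>R (\<Sum>k<n. jacobian g (v k))) *v (B - A))
      = norm (\<Sum>k<n. g (v (Suc k)) - g (v k) - blinfun_apply (g' (v k)) (v (Suc k) - v k))"
    unfolding sum1 sum2 by (simp add: sum_subtractf)
  also have "\<dots> \<le> (\<Sum>k<n. norm (g (v (Suc k)) - g (v k) - blinfun_apply (g' (v k)) (v (Suc k) - v k)))"
    by (rule norm_sum)
  also have "\<dots> \<le> (\<Sum>k<n. norm (v (Suc k) - v k) * \<epsilon>)" by (intro sum_mono piece) auto
  also have "\<dots> = \<epsilon> * norm (B - A)" unfolding vstep using n by simp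
  finally show ?thesis using n unfolding v_def by blast
qed


lemma real_lower:
  fixes X Ne h y e3 K D :: real
  assumes X0: "X \<ge> 0" and h: "0 < h" "h \<le> 1" and Xu: "X \<le> Ne + h*D"
    and main: "Ne \<le> (1 + h*y)*X + h*e3 + h^2*K" and D: "D \<ge> 0" "K \<ge> 0" "e3 \<ge> 0"
  shows "Ne - h*(y*Ne + e3) - h^2*(K + \<bar>y\<bar>*(D + e3 + K)) \<le> X"
proof (cases "y \<ge> 0")
  case True
  have a: "h*y*X \<le> h*y*(Ne + h*D)" using True h Xu by (intro mult_left_mono) auto
  have b0: "y*D \<le> \<bar>y\<bar>*(D+e3+K)" using True D mult_left_mono[of D "D+e3+K" y] by simp
  have b: "h^2*(y*D) \<le> h^2*(\<bar>y\<bar>*(D+e3+K))" using b0 by (intro mult_left_mono) auto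
  show ?thesis using main a b by (simp add: algebra_simps power2_eq_square)
next
  case False
  have hy: "h*y \<le> 0" using False h by (simp add: mult_nonneg_nonpos)
  have "h*y*X \<le> 0" using hy X0 by (simp add: mult_nonpos_nonneg)
  then have L0: "Ne - h*e3 - h^2*K \<le> X" using main by (simp add: algebra_simps)
  have a: "h*y*X \<le> h*y*(Ne - h*e3 - h^2*K)" using L0 hy by (rule mult_left_mono_neg)
  have c: "h^3 * (\<bar>y\<bar> * K) \<le> h^2 * (\<bar>y\<bar> * K)"
  proof -
    have "h^3 = h^2 * h" by (simp add: power3_eq_cube power2_eq_square)
    moreover have "h^2 * h * (\<bar>y\<bar> * K) \<le> h^2 * 1 * (\<bar>y\<bar> * K)" using h D by (intro mult_right_mono mult_left_mono) auto
    ultimately show ?thesis by simp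
  qed
  have yabs: "\<bar>y\<bar> = - y" using False by simp
  have "h*y*(Ne - h*e3 - h^2*K) = h*y*Ne + h^2*(\<bar>y\<bar>*e3) + h^3*(\<bar>y\<bar>*K)"
    unfolding yabs by (simp add: algebra_simps power2_eq_square power3_eq_cube)
  then have "Ne \<le> X + h*y*Ne + h^2*(\<bar>y\<bar>*e3) + h^2*(\<bar>y\<bar>*K) + h*e3 + h^2*K"
    using main a c by (simp add: algebra_simps)
  moreover have "h^2*(\<bar>y\<bar>*D) \<ge> 0" using D by simp
  ultimately show ?thesis by (simp add: algebra_simps)
qed

context
  fixes N :: "real^'n \<Rightarrow> real" and g :: "real^'n \<Rightarrow> real^'n" and g' :: "real^'n \<Rightarrow> ((real^'n) \<Rightarrow>\<^sub>L (real^'n))"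
  assumes N: "is_norm N" and gd: "\<And>x. (g has_derivative blinfun_apply (g' x)) (at x)" and gc: "continuous_on UNIV g'"
begin

lemma IN_blin: "\<exists>Cc>0. \<forall>A X. (\<forall>z. A *v z = blinfun_apply X z) \<longrightarrow> induced_norm N A \<le> Cc * norm X"
proof -
  obtain C where C: "C > 0" "\<And>x. N x \<le> C * norm x" using N_upper[OF N] by blast
  obtain c where c: "c > 0" "\<And>x. c * norm x \<le> N x" using N_lower[OF N] by blast
  have "induced_norm N A \<le> C / c * norm X" if h: "\<forall>z. A *v z = blinfun_apply X z" for A X
  proof (rule IN_least[OF N])
    fix z
    have "N (A *v z) \<le> C * norm (blinfun_apply X z)" using C(2) h by simp
    also have "\<dots> \<le> C * (norm X * norm z)" using C(1) norm_blinfun[of X z] by (intro mult_left_mono) auto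
    also have "norm z \<le> N z / c" using c(2)[of z] c(1) by (simp add: field_simps)
    then have "C * (norm X * norm z) \<le> C * (norm X * (N z / c))" using C(1) by (intro mult_left_mono) auto
    finally show "N (A *v z) \<le> C / c * norm X * N z" by (simp add: field_simps)
  qed
  then show ?thesis using C(1) c(1) by (intro exI[of _ "C / c"]) auto
qed

lemma mu_cont: "continuous_on UNIV (\<lambda>v. matrix_measure N (a *\<^sub>R jacobian g v))"
proof -
  obtain Cc where Cc: "Cc > 0" "\<And>A X. (\<forall>z. A *v z = blinfun_apply X z) \<Longrightarrow> induced_norm N A \<le> Cc * norm X"
    using IN_blin by blast
  have inb: "induced_norm N (a *\<^sub>R jacobian g w - a *\<^sub>R jacobian g v) \<le> Cc * (\<bar>a\<bar> * norm (g' w - g' v))" for v w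
  proof -
    have "\<forall>z. (a *\<^sub>R jacobian g w - a *\<^sub>R jacobian g v) *v z = blinfun_apply (a *\<^sub>R (g' w - g' v)) z"
      by (simp add: matrix_vector_mult_diff_rdistrib scaleR_matrix_vector_assoc[symmetric] jac_apply[OF gd]
          blinfun.diff_left blinfun.scaleR_left scaleR_diff_right)
    from Cc(2)[OF this] show ?thesis by simp
  qed
  have bnd: "\<bar>matrix_measure N (a *\<^sub>R jacobian g w) - matrix_measure N (a *\<^sub>R jacobian g v)\<bar>
      \<le> Cc * (\<bar>a\<bar> * norm (g' w - g' v))" for v w
    using mu_lip[OF N, of "a *\<^sub>R jacobian g w" "a *\<^sub>R jacobian g v"] mu_lip[OF N, of "a *\<^sub>R jacobian g v" "a *\<^sub>R jacobian g w"]
      inb[of w v] inb[of v w] by (simp add: norm_minus_commute abs_le_iff)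
  show ?thesis unfolding continuous_on_iff
  proof (intro ballI allI impI)
    fix v and e :: real assume e: "e > 0"
    define e' where "e' = e / (Cc * (\<bar>a\<bar> + 1))"
    have e': "e' > 0" unfolding e'_def using e Cc by simp
    obtain d where d: "d > 0" "\<And>w. dist w v < d \<Longrightarrow> dist (g' w) (g' v) < e'"
      using gc e' unfolding continuous_on_iff by blast
    show "\<exists>d>0. \<forall>w\<in>UNIV. dist w v < d \<longrightarrow> dist (matrix_measure N (a *\<^sub>R jacobian g w)) (matrix_measure N (a *\<^sub>R jacobian g v)) < e"
    proof (intro exI[of _ d] conjI ballI impI)
      fix w assume "dist w v < d"
      then have n: "norm (g' w - g' v) < e'" using d(2) by (simp add: dist_norm)
      have "Cc * (\<bar>a\<bar> * norm (g' w - g' v)) \<le> Cc * ((\<bar>a\<bar> + 1) * norm (g' w - g' v))"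
        using Cc(1) by (intro mult_left_mono mult_right_mono) auto
      also have "\<dots> < Cc * ((\<bar>a\<bar> + 1) * e')"
        using Cc(1) n by (intro mult_strict_left_mono) auto
      also have "\<dots> = e"
      proof -
        have "Cc * (\<bar>a\<bar> + 1) > 0" using Cc(1) by simp
        then show ?thesis unfolding e'_def using Cc(1) by (simp add: mult.assoc[symmetric])
      qed
      finally show "dist (matrix_measure N (a *\<^sub>R jacobian g w)) (matrix_measure N (a *\<^sub>R jacobian g v)) < e"
        using bnd[of w v] by (simp add: dist_real_def)
    qed (use d in auto)
  qed
qed


lemma seg_pt: "n > 0 \<Longrightarrow> k < n \<Longrightarrow> A + (real k / real n) *\<^sub>R (B - A) \<in> closed_segment A B"
proof -
  assume n: "n > 0" and k: "k < n"
  have "A + (real k / real n) *\<^sub>R (B - A) = (1 - real k / real n) *\<^sub>R A + (real k / real n) *\<^sub>R B"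
    by (simp add: algebra_simps)
  moreover have "0 \<le> real k / real n" "real k / real n \<le> 1" using n k by auto
  ultimately show ?thesis unfolding in_segment by blast
qed

lemma frac_le: "(x::real) \<ge> 0 \<Longrightarrow> e > 0 \<Longrightarrow> e / (2 * (x + 1)) * x \<le> e / 2"
proof -
  assume x: "x \<ge> 0" and e: "e > 0"
  have "e / (2 * (x + 1)) * x = (e / 2) * (x / (x + 1))" by (simp add: field_simps)
  also have "\<dots> \<le> (e / 2) * 1" using x e by (intro mult_left_mono) auto
  finally show ?thesis by simp
qed

lemma key_common:
  assumes e: "\<epsilon> > 0"
  obtains n J C where "n > 0" "C > 0" "\<And>x. N x \<le> C * norm x"
    "\<And>k. k < n \<Longrightarrow> J k = jacobian g (A + (real k / real n) *\<^sub>R (B - A))"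
    "\<And>k. k < n \<Longrightarrow> A + (real k / real n) *\<^sub>R (B - A) \<in> closed_segment A B"
    "C * norm (g B - g A - ((1 / real n) *\<^sub>R (\<Sum>k<n. J k)) *v (B - A)) \<le> \<epsilon> / 2"
proof -
  obtain C where C: "C > 0" "\<And>x. N x \<le> C * norm x" using N_upper[OF N] by blast
  define \<epsilon>' where "\<epsilon>' = \<epsilon> / (2 * C * (norm (B - A) + 1))"
  have e': "\<epsilon>' > 0" unfolding \<epsilon>'_def using e C by (simp add: add_nonneg_pos)
  obtain n where n: "n > 0" "norm (g B - g A - ((1 / real n) *\<^sub>R (\<Sum>k<n. jacobian g (A + (real k / real n) *\<^sub>R (B - A)))) *v (B - A)) \<le> \<epsilon>' * norm (B - A)"
    using linearization[OF gd gc e'] by blast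
  define J where "J k = jacobian g (A + (real k / real n) *\<^sub>R (B - A))" for k
  have "C * norm (g B - g A - ((1 / real n) *\<^sub>R (\<Sum>k<n. J k)) *v (B - A)) \<le> C * (\<epsilon>' * norm (B - A))"
    using n(2) C(1) unfolding J_def by (intro mult_left_mono) auto
  also have "\<dots> = \<epsilon> / (2 * (norm (B - A) + 1)) * norm (B - A)"
  proof -
    have p: "norm (B - A) + 1 > 0" by (simp add: add_nonneg_pos)
    show ?thesis unfolding \<epsilon>'_def using C(1) p by (simp add: divide_simps)
  qed
  also have "\<dots> \<le> \<epsilon> / 2" by (rule frac_le[OF norm_ge_zero e])
  finally show ?thesis using that[OF n(1) C J_def seg_pt[OF n(1)]] by blast
qed

lemma key_upper:
  assumes M: "\<And>v. v \<in> closed_segment A B \<Longrightarrow> matrix_measure N (jacobian g v) \<le> M" and e: "\<epsilon> > 0"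
  shows "eventually (\<lambda>h. N ((B - A) + h *\<^sub>R (g B - g A)) \<le> N (B - A) + h * (M * N (B - A) + \<epsilon>)) (at_right 0)"
proof -
  obtain n J C where n: "n > 0" and C: "C > 0" "\<And>x. N x \<le> C * norm x"
    and J: "\<And>k. k < n \<Longrightarrow> J k = jacobian g (A + (real k / real n) *\<^sub>R (B - A))"
    and seg: "\<And>k. k < n \<Longrightarrow> A + (real k / real n) *\<^sub>R (B - A) \<in> closed_segment A B"
    and lin: "C * norm (g B - g A - ((1 / real n) *\<^sub>R (\<Sum>k<n. J k)) *v (B - A)) \<le> \<epsilon> / 2"
    using key_common[OF e] by metis
  define e where "e = B - A"
  define d where "d = g B - g A"
  define Ab where "Ab = (1 / real n) *\<^sub>R (\<Sum>k<n. J k)"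
  define \<epsilon>2 where "\<epsilon>2 = \<epsilon> / (2 * (N e + 1))"
  have e2: "\<epsilon>2 > 0" unfolding \<epsilon>2_def using e N_nonneg[OF N, of e] by (simp add: add_nonneg_pos)
  have Jm: "matrix_measure N (J k) \<le> M" if "k < n" for k using M[OF seg[OF that]] J[OF that] by simp
  have ev: "eventually (\<lambda>h. induced_norm N (mat 1 + h *\<^sub>R Ab) \<le> 1 + h * (M + \<epsilon>2)) (at_right 0)"
    unfolding Ab_def by (rule avg_eventually[OF N n Jm e2])
  show ?thesis using ev eventually_at_right_less[of 0]
  proof eventually_elim
    case (elim h)
    have eq: "e + h *\<^sub>R d = (mat 1 + h *\<^sub>R Ab) *v e + h *\<^sub>R (d - Ab *v e)"
      by (simp add: matrix_vector_mult_add_rdistrib scaleR_matrix_vector_assoc[symmetric] algebra_simps)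
    have "N (e + h *\<^sub>R d) \<le> N ((mat 1 + h *\<^sub>R Ab) *v e) + N (h *\<^sub>R (d - Ab *v e))"
      unfolding eq by (rule N_tri[OF N])
    also have "\<dots> \<le> induced_norm N (mat 1 + h *\<^sub>R Ab) * N e + h * (C * norm (d - Ab *v e))"
      using elim(2) C(2)[of "d - Ab *v e"] by (intro add_mono IN_le[OF N]) (auto simp: N_hom[OF N])
    also have "\<dots> \<le> (1 + h * (M + \<epsilon>2)) * N e + h * (\<epsilon> / 2)"
      using elim lin N_nonneg[OF N, of e] unfolding Ab_def d_def e_def
      by (intro add_mono mult_right_mono mult_left_mono) auto
    also have "\<dots> = N e + h * (M * N e) + h * (\<epsilon>2 * N e + \<epsilon> / 2)" by (simp add: algebra_simps)
    also have "\<dots> \<le> N e + h * (M * N e) + h * (\<epsilon> / 2 + \<epsilon> / 2)"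
    proof -
      have b: "\<epsilon>2 * N e \<le> \<epsilon> / 2" unfolding \<epsilon>2_def using frac_le[OF N_nonneg[OF N, of e] e] by simp
      have "h * (\<epsilon>2 * N e + \<epsilon> / 2) \<le> h * (\<epsilon> / 2 + \<epsilon> / 2)" using b elim(2) by (intro mult_left_mono) auto
      then show ?thesis by simp
    qed
    finally show ?case unfolding e_def d_def by (simp add: algebra_simps)
  qed
qed

lemma key_lower:
  assumes M: "\<And>v. v \<in> closed_segment A B \<Longrightarrow> matrix_measure N (- jacobian g v) \<le> M" and e: "\<epsilon> > 0"
  shows "eventually (\<lambda>h. N (B - A) - h * (M * N (B - A) + \<epsilon>) \<le> N ((B - A) + h *\<^sub>R (g B - g A))) (at_right 0)"
proof -
  have e3: "\<epsilon> / 3 > 0" using e by simp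
  obtain n J C where n: "n > 0" and C: "C > 0" "\<And>x. N x \<le> C * norm x"
    and J: "\<And>k. k < n \<Longrightarrow> J k = jacobian g (A + (real k / real n) *\<^sub>R (B - A))"
    and seg: "\<And>k. k < n \<Longrightarrow> A + (real k / real n) *\<^sub>R (B - A) \<in> closed_segment A B"
    and lin: "C * norm (g B - g A - ((1 / real n) *\<^sub>R (\<Sum>k<n. J k)) *v (B - A)) \<le> \<epsilon> / 3 / 2"
    using key_common[OF e3] by metis
  define e where "e = B - A"
  define d where "d = g B - g A"
  define Ab where "Ab = (1 / real n) *\<^sub>R (\<Sum>k<n. J k)"
  define \<epsilon>2 where "\<epsilon>2 = \<epsilon> / 3 / (2 * (N e + 1))"
  have e2: "\<epsilon>2 > 0" unfolding \<epsilon>2_def using e N_nonneg[OF N, of e] by (simp add: add_nonneg_pos)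
  define y where "y = M + \<epsilon>2"
  define e3 where "e3 = C * norm (d - Ab *v e)"
  define K where "K = N (Ab *v d)"
  define D where "D = N d"
  define K2 where "K2 = K + \<bar>y\<bar> * (D + e3 + K)"
  have Ne0: "N e \<ge> 0" "K \<ge> 0" "D \<ge> 0" "e3 \<ge> 0" unfolding K_def D_def e3_def using N_nonneg[OF N] C by auto
  have K20: "K2 \<ge> 0" unfolding K2_def using Ne0 by auto
  have e3b: "e3 \<le> \<epsilon> / 3"
  proof -
    have "e3 \<le> \<epsilon> / 3 / 2" unfolding e3_def Ab_def d_def e_def using lin by simp
    then show ?thesis using Ne0(4) by linarith
  qed
  have Jm: "matrix_measure N (- J k) \<le> M" if "k < n" for k using M[OF seg[OF that]] J[OF that] by simp
  have ev: "eventually (\<lambda>h. induced_norm N (mat 1 + h *\<^sub>R ((1 / real n) *\<^sub>R (\<Sum>k<n. - J k))) \<le> 1 + h * (M + \<epsilon>2)) (at_right 0)"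
    by (rule avg_eventually[OF N n Jm e2])
  have ev2: "eventually (\<lambda>h. h < min 1 (\<epsilon> / 3 / (K2 + 1))) (at_right (0::real))"
  proof -
    have "min 1 (\<epsilon> / 3 / (K2 + 1)) > 0" using e K20 by simp
    then show ?thesis unfolding eventually_at_right_field by (intro exI[of _ "min 1 (\<epsilon> / 3 / (K2 + 1))"]) auto
  qed
  show ?thesis using ev ev2 eventually_at_right_less[of 0]
  proof eventually_elim
    case (elim h)
    have h: "0 < h" "h \<le> 1" using elim by auto
    have mAb: "(1 / real n) *\<^sub>R (\<Sum>k<n. - J k) = - Ab" unfolding Ab_def by (simp add: sum_negf)
    have IN: "induced_norm N (mat 1 - h *\<^sub>R Ab) \<le> 1 + h * y" using elim(1) unfolding mAb y_def by simp
    define X where "X = N (e + h *\<^sub>R d)"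
    have eq: "e = (mat 1 - h *\<^sub>R Ab) *v (e + h *\<^sub>R d) - h *\<^sub>R (d - Ab *v e) + (h^2) *\<^sub>R (Ab *v d)"
      by (simp add: matrix_vector_mult_diff_rdistrib matrix_vector_right_distrib scaleR_matrix_vector_assoc[symmetric]
          matrix_scaleR_vector_ac algebra_simps power2_eq_square)
    have "N e \<le> N ((mat 1 - h *\<^sub>R Ab) *v (e + h *\<^sub>R d)) + N (h *\<^sub>R (d - Ab *v e)) + N ((h^2) *\<^sub>R (Ab *v d))"
    proof -
      let ?a = "(mat 1 - h *\<^sub>R Ab) *v (e + h *\<^sub>R d)" and ?b = "h *\<^sub>R (d - Ab *v e)" and ?c = "(h^2) *\<^sub>R (Ab *v d)"
      have "N e = N (?a - ?b + ?c)" using eq by simp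
      also have "\<dots> \<le> N (?a - ?b) + N ?c" by (rule N_tri[OF N])
      also have "N (?a - ?b) \<le> N ?a + N ?b" by (rule N_tri_diff[OF N])
      finally show ?thesis by simp
    qed
    also have "\<dots> \<le> (1 + h * y) * X + h * e3 + h^2 * K"
    proof (intro add_mono)
      show "N ((mat 1 - h *\<^sub>R Ab) *v (e + h *\<^sub>R d)) \<le> (1 + h * y) * X"
      proof -
        have "N ((mat 1 - h *\<^sub>R Ab) *v (e + h *\<^sub>R d)) \<le> induced_norm N (mat 1 - h *\<^sub>R Ab) * X"
          unfolding X_def by (rule IN_le[OF N])
        also have "\<dots> \<le> (1 + h * y) * X" using IN N_nonneg[OF N] unfolding X_def by (intro mult_right_mono) auto
        finally show ?thesis .
      qed
      show "N (h *\<^sub>R (d - Ab *v e)) \<le> h * e3" unfolding e3_def using h C(2)[of "d - Ab *v e"]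
        by (simp add: N_hom[OF N] mult_left_mono)
      show "N ((h^2) *\<^sub>R (Ab *v d)) \<le> h^2 * K" unfolding K_def by (simp add: N_hom[OF N])
    qed
    finally have main: "N e \<le> (1 + h * y) * X + h * e3 + h^2 * K" .
    have Xu: "X \<le> N e + h * D" unfolding X_def D_def using N_tri[OF N, of e "h *\<^sub>R d"] h by (simp add: N_hom[OF N])
    have X0: "X \<ge> 0" unfolding X_def by (rule N_nonneg[OF N])
    have rl: "N e - h * (y * N e + e3) - h^2 * K2 \<le> X"
      unfolding K2_def by (rule real_lower[OF X0 h Xu main Ne0(3) Ne0(2) Ne0(4)])
    have "h * K2 \<le> \<epsilon> / 3"
    proof -
      have "h * K2 \<le> (\<epsilon> / 3 / (K2 + 1)) * K2" using elim(2) K20 by (intro mult_right_mono) auto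
      also have "\<dots> \<le> \<epsilon> / 3" using K20 e by (simp add: field_simps)
      finally show ?thesis .
    qed
    then have a: "h^2 * K2 \<le> h * (\<epsilon> / 3)" using h by (simp add: power2_eq_square mult.assoc mult_left_mono)
    have b0: "\<epsilon>2 * N e \<le> \<epsilon> / 3 / 2" unfolding \<epsilon>2_def by (rule frac_le[OF Ne0(1) e3])
    have b: "\<epsilon>2 * N e \<le> \<epsilon> / 3" using b0 e by linarith
    have "N e - h * (M * N e + \<epsilon>) \<le> N e - h * (y * N e + e3) - h^2 * K2"
    proof -
      have "h * (\<epsilon>2 * N e + e3) + h^2 * K2 \<le> h * (\<epsilon> / 3 + \<epsilon> / 3) + h * (\<epsilon> / 3)"
        using a b e3b h by (intro add_mono mult_left_mono) auto
      then show ?thesis unfolding y_def by (simp add: algebra_simps)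
    qed
    then show ?case using rl unfolding X_def e_def d_def by simp
  qed
qed

end


lemma INF_neg_real: "(INF v\<in>A. - h v) = - (SUP v\<in>A. h v :: real)"
  by (simp add: Inf_real_def image_image)

theorem lemma5:
  fixes f :: "'p::finite \<Rightarrow> real^'n \<Rightarrow> real^'n"
    and \<sigma> :: "real \<Rightarrow> 'p"
    and K :: "(real^'n) set"
    and N :: "real^'n \<Rightarrow> real"
  assumes C1: "\<And>p. continuously_differentiable (f p)"
    and fc: "\<And>p. forward_complete (f p)"
    and sw: "switching_signal \<sigma>"
    and K: "compact K" "interior K \<noteq> {}"
    and N: "is_norm N"
  shows "\<forall>x\<in>K. \<forall>xb\<in>K. \<forall>t\<ge>0.
     exp (eta_lower f \<sigma> K N t) * N (xb - x)
       \<le> N (switched_flow f \<sigma> t xb - switched_flow f \<sigma> t x)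
     \<and> N (switched_flow f \<sigma> t xb - switched_flow f \<sigma> t x)
       \<le> exp (eta_upper_alt f \<sigma> K N t) * N (xb - x)"
proof (intro ballI allI impI)
  fix x xb t assume x: "x \<in> K" and xb: "xb \<in> K" and t: "t \<ge> (0::real)"
  have Kne: "K \<noteq> {}" using K(2) interior_subset by blast
  have "\<forall>p. \<exists>g'. (\<forall>x. (f p has_derivative blinfun_apply (g' x)) (at x)) \<and> continuous_on UNIV g'"
    using C1 unfolding continuously_differentiable_def by blast
  then obtain F' where F'd: "\<And>p x. (f p has_derivative blinfun_apply (F' p x)) (at x)"
    and F'c: "\<And>p. continuous_on UNIV (F' p)" by metis
  define \<Phi> where "\<Phi> s y = switched_flow f \<sigma> s y" for s y
  define G1 where "G1 p s = (SUP v\<in>convex hull (\<Phi> s ` K). matrix_measure N (jacobian (f p) v))" for p s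
  define G2 where "G2 p s = (SUP v\<in>convex hull (\<Phi> s ` K). matrix_measure N (- jacobian (f p) v))" for p s
  have g1c: "continuous_on UNIV (\<lambda>v. matrix_measure N (jacobian (f p) v))" for p
    using mu_cont[OF N F'd F'c, where a=1] by simp
  have g2c: "continuous_on UNIV (\<lambda>v. matrix_measure N (- jacobian (f p) v))" for p
    using mu_cont[OF N F'd F'c, where a="-1"] by simp
  have G1c: "continuous_on {0..T} (G1 p)" if "T \<ge> 0" for p T
    unfolding G1_def \<Phi>_def by (rule G_cont[where f=f and \<sigma>=\<sigma>, OF C1 fc sw K(1) Kne g1c that])
  have G2c: "continuous_on {0..T} (\<lambda>s. - G2 p s)" if "T \<ge> 0" for p T
    unfolding G2_def \<Phi>_def by (intro continuous_on_minus G_cont[where f=f and \<sigma>=\<sigma>, OF C1 fc sw K(1) Kne g2c that])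
  define etaU where "etaU r = (\<Sum>p\<in>UNIV. integral {0..r} (\<lambda>s. G1 p s * (if \<sigma> s = p then 1 else 0)))" for r
  define etaL where "etaL r = (\<Sum>p\<in>UNIV. integral {0..r} (\<lambda>s. (- G2 p s) * (if \<sigma> s = p then 1 else 0)))" for r
  have etaU_eq: "eta_upper_alt f \<sigma> K N r = etaU r" for r
    unfolding eta_upper_alt_def etaU_def G1_def \<Phi>_def by simp
  have etaL_eq: "eta_lower f \<sigma> K N r = etaL r" for r
    unfolding eta_lower_def etaL_def G2_def \<Phi>_def by (simp add: INF_neg_real)
  have etaU0: "etaU 0 = 0" "etaL 0 = 0" unfolding etaU_def etaL_def by simp_all
  define u where "u r = N (\<Phi> r xb - \<Phi> r x)" for r
  have u0: "u 0 = N (xb - x)" unfolding u_def \<Phi>_def using Phi_0[where f=f and \<sigma>=\<sigma>, OF C1 fc sw] by simp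
  have ucont: "continuous_on {0..t} u"
  proof -
    have "continuous_on {0..t} (\<lambda>r. \<Phi> r xb - \<Phi> r x)" unfolding \<Phi>_def
      by (intro continuous_intros continuous_on_subset[OF Phi_cont[where f=f and \<sigma>=\<sigma>, OF C1 fc sw]]) auto
    then show ?thesis unfolding u_def by (rule continuous_on_compose2[OF N_cont[OF N]]) auto
  qed
  obtain C where C: "C > 0" "\<And>y. N y \<le> C * norm y" using N_upper[OF N] by blast
  have local: "((\<lambda>r. \<Phi> r xb - \<Phi> r x) has_vector_derivative (f (\<sigma> s) (\<Phi> s xb) - f (\<sigma> s) (\<Phi> s x))) (at_right s)
      \<and> closed_segment (\<Phi> s x) (\<Phi> s xb) \<subseteq> convex hull (\<Phi> s ` K)" if s: "s \<ge> 0" for s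
  proof
    show "((\<lambda>r. \<Phi> r xb - \<Phi> r x) has_vector_derivative (f (\<sigma> s) (\<Phi> s xb) - f (\<sigma> s) (\<Phi> s x))) (at_right s)"
      unfolding \<Phi>_def using Phi_deriv[where f=f and \<sigma>=\<sigma>, OF C1 fc sw s]
      by (auto intro!: derivative_eq_intros)
    have "\<Phi> s x \<in> convex hull (\<Phi> s ` K)" "\<Phi> s xb \<in> convex hull (\<Phi> s ` K)"
      using x xb by (auto intro: hull_inc)
    then show "closed_segment (\<Phi> s x) (\<Phi> s xb) \<subseteq> convex hull (\<Phi> s ` K)"
      by (intro closed_segment_subset convex_convex_hull)
  qed
  have approx: "eventually (\<lambda>r. \<bar>u r - N ((\<Phi> s xb - \<Phi> s x) + (r - s) *\<^sub>R (f (\<sigma> s) (\<Phi> s xb) - f (\<sigma> s) (\<Phi> s x)))\<bar> \<le> (r - s) * (\<epsilon> / 2)) (at_right s)"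
    if s: "s \<ge> 0" and e: "\<epsilon> > 0" for s \<epsilon>
  proof -
    have e': "\<epsilon> / 2 / C > 0" using e C by simp
    show ?thesis using vderiv_approx[OF conjunct1[OF local[OF s]] e'] eventually_at_right_less[of s]
    proof eventually_elim
      case (elim r)
      let ?a = "\<Phi> r xb - \<Phi> r x" and ?b = "(\<Phi> s xb - \<Phi> s x) + (r - s) *\<^sub>R (f (\<sigma> s) (\<Phi> s xb) - f (\<sigma> s) (\<Phi> s x))"
      have "\<bar>N ?a - N ?b\<bar> \<le> N (?a - ?b)" using N_diff[OF N, of ?a ?b] N_diff[OF N, of ?b ?a] N_minus_commute[OF N, of ?a ?b] by linarith
      also have "\<dots> \<le> C * norm (?a - ?b)" by (rule C(2))
      also have "\<dots> \<le> C * ((r - s) * (\<epsilon> / 2 / C))" using elim(1) C(1) by (intro mult_left_mono) auto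
      also have "\<dots> = (r - s) * (\<epsilon> / 2)" using C(1) by simp
      finally show ?case unfolding u_def .
    qed
  qed
  have shift: "eventually (\<lambda>r. P (r - s)) (at_right s)" if "eventually P (at_right 0)" for P and s :: real
    using that by (subst eventually_at_right_to_0) simp
  have "u t * exp (- etaU t) \<le> u 0 * exp (- etaU 0)"
  proof (rule gronwall[where k="\<lambda>s. G1 (\<sigma> s) s" and c=1, OF t ucont])
    show "continuous_on {0..t} etaU" unfolding etaU_def by (rule eta_generic(2)[OF sw G1c t])
    fix s assume s: "s \<in> {0..<t}"
    then have s0: "s \<ge> 0" by simp
    show "(etaU has_real_derivative G1 (\<sigma> s) s) (at s within {s<..})"
      unfolding etaU_def[abs_def] by (rule eta_generic(1)[OF sw G1c s0])
    fix \<epsilon> :: real assume e: "\<epsilon> > 0"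
    have M: "matrix_measure N (jacobian (f (\<sigma> s)) v) \<le> G1 (\<sigma> s) s" if "v \<in> closed_segment (\<Phi> s x) (\<Phi> s xb)" for v
      unfolding G1_def
      by (rule cSUP_upper[OF _ G_bdd(1)[where f=f and \<sigma>=\<sigma>, OF C1 fc sw K(1) g1c s0, folded \<Phi>_def]])
         (use that local[OF s0] in blast)
    have e2: "\<epsilon> / 2 > 0" using e by simp
    have ku: "eventually (\<lambda>r. N ((\<Phi> s xb - \<Phi> s x) + (r - s) *\<^sub>R (f (\<sigma> s) (\<Phi> s xb) - f (\<sigma> s) (\<Phi> s x)))
        \<le> N (\<Phi> s xb - \<Phi> s x) + (r - s) * (G1 (\<sigma> s) s * N (\<Phi> s xb - \<Phi> s x) + \<epsilon> / 2)) (at_right s)"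
      by (rule shift[OF key_upper[OF N F'd F'c M e2]])
    show "eventually (\<lambda>r. u r \<le> u s + (r - s) * (G1 (\<sigma> s) s * u s + \<epsilon>)) (at_right s)"
      using ku approx[OF s0 e]
    proof eventually_elim
      case (elim r)
      have us: "u s = N (\<Phi> s xb - \<Phi> s x)" unfolding u_def ..
      have eq: "(r - s) * (G1 (\<sigma> s) s * N (\<Phi> s xb - \<Phi> s x) + \<epsilon>) = (r - s) * (G1 (\<sigma> s) s * N (\<Phi> s xb - \<Phi> s x) + \<epsilon> / 2) + (r - s) * (\<epsilon> / 2)"
        by (simp add: algebra_simps)
      show ?case unfolding us using elim eq unfolding abs_le_iff by linarith
    qed
  qed simp
  then have upper: "u t \<le> exp (etaU t) * N (xb - x)"
    using etaU0 u0 by (simp add: exp_minus field_simps)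
  have "(- u t) * exp (- etaL t) \<le> (- u 0) * exp (- etaL 0)"
  proof (rule gronwall[where k="\<lambda>s. - G2 (\<sigma> s) s" and c=1, OF t])
    show "continuous_on {0..t} (\<lambda>r. - u r)" by (intro continuous_intros ucont)
    show "continuous_on {0..t} etaL" unfolding etaL_def by (rule eta_generic(2)[OF sw G2c t])
    fix s assume s: "s \<in> {0..<t}"
    then have s0: "s \<ge> 0" by simp
    show "(etaL has_real_derivative - G2 (\<sigma> s) s) (at s within {s<..})"
      unfolding etaL_def[abs_def] using eta_generic(1)[OF sw G2c s0] by simp
    fix \<epsilon> :: real assume e: "\<epsilon> > 0"
    have M: "matrix_measure N (- jacobian (f (\<sigma> s)) v) \<le> G2 (\<sigma> s) s" if "v \<in> closed_segment (\<Phi> s x) (\<Phi> s xb)" for v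
      unfolding G2_def
      by (rule cSUP_upper[OF _ G_bdd(1)[where f=f and \<sigma>=\<sigma>, OF C1 fc sw K(1) g2c s0, folded \<Phi>_def]])
         (use that local[OF s0] in blast)
    have e2: "\<epsilon> / 2 > 0" using e by simp
    have kl: "eventually (\<lambda>r. N (\<Phi> s xb - \<Phi> s x) - (r - s) * (G2 (\<sigma> s) s * N (\<Phi> s xb - \<Phi> s x) + \<epsilon> / 2)
        \<le> N ((\<Phi> s xb - \<Phi> s x) + (r - s) *\<^sub>R (f (\<sigma> s) (\<Phi> s xb) - f (\<sigma> s) (\<Phi> s x)))) (at_right s)"
      by (rule shift[OF key_lower[OF N F'd F'c M e2]])
    show "eventually (\<lambda>r. - u r \<le> - u s + (r - s) * (- G2 (\<sigma> s) s * - u s + \<epsilon>)) (at_right s)"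
      using kl approx[OF s0 e]
    proof eventually_elim
      case (elim r)
      have us: "u s = N (\<Phi> s xb - \<Phi> s x)" unfolding u_def ..
      have eq: "(r - s) * (- G2 (\<sigma> s) s * - N (\<Phi> s xb - \<Phi> s x) + \<epsilon>) = (r - s) * (G2 (\<sigma> s) s * N (\<Phi> s xb - \<Phi> s x) + \<epsilon> / 2) + (r - s) * (\<epsilon> / 2)"
        by (simp add: algebra_simps)
      show ?case unfolding us using elim eq unfolding abs_le_iff by linarith
    qed
  qed simp
  then have lower: "exp (etaL t) * N (xb - x) \<le> u t"
    using etaU0 u0 by (simp add: exp_minus field_simps)
  show "exp (eta_lower f \<sigma> K N t) * N (xb - x) \<le> N (switched_flow f \<sigma> t xb - switched_flow f \<sigma> t x) \<and>
        N (switched_flow f \<sigma> t xb - switched_flow f \<sigma> t x) \<le> exp (eta_upper_alt f \<sigma> K N t) * N (xb - x)"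
    using upper lower unfolding etaU_eq etaL_eq u_def \<Phi>_def by simp
qed


end
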